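(* An integral domain $D$ is a $\ast$-SH domain of type $2$ if and only if $D$ is a $\ast$-Krull domain.
   Context: $\ast$ is a star operation on $D$ of finite character. A $\ast$-ideal is a nonzero fractional ideal $I$ with $I^\ast=I$; it is of finite type if $I=J^\ast$ for some nonzero finitely generated $J$. A maximal $\ast$-ideal is an integral $\ast$-ideal maximal among proper integral $\ast$-ideals. A $\ast$-homog ideal is an integral $\ast$-ideal $I$ of finite type with $I\subsetneq D$ such that $(J+L)^{\ast}\neq D$ for every pair $J,L$ of proper integral $\ast$-ideals of finite type containing $I$; such $I$ lies in a unique maximal $\ast$-ideal $M(I)$. $D$ is a $\ast$-SH domain if every $xD$, $x$ a nonzero nonunit, is a $\ast$-product $(I_1\cdots I_n)^\ast$ of finitely many $\ast$-homog ideals. A $\ast$-homog ideal $I$ is of type $2$ if $I=((M(I))^n)^\ast$ for some positive integer $n$; $D$ is a $\ast$-SH domain of type $2$ if for every nonzero nonunit $x$, $xD$ is a $\ast$-product of finitely many $\ast$-homog ideals of type $2$. $D$ is a $\ast$-weakly Krull domain if it is a $\ast$-SH domain all of whose maximal $\ast$-ideals have height $1$; $D$ is a $\ast$-Krull domain if it is a $\ast$-weakly Krull domain such that $D_P$ is a rank-one discrete valuation domain for every maximal $\ast$-ideal $P$. *)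

theory Defs
  imports Main
begin

text \<open>An integral domain D is modelled as a subring of a field 'a which is
  its quotient field. Fractional ideals, star operations etc. live in 'a.\<close>

definition subdomain :: "('a::field) set \<Rightarrow> bool" where
  "subdomain D \<longleftrightarrow> 0 \<in> D \<and> 1 \<in> D \<and>
     (\<forall>x\<in>D. \<forall>y\<in>D. x + y \<in> D \<and> x * y \<in> D \<and> - x \<in> D)"

definition is_quotient_field :: "('a::field) set \<Rightarrow> bool" where
  "is_quotient_field D \<longleftrightarrow> (\<forall>x. \<exists>a\<in>D. \<exists>b\<in>D. b \<noteq> 0 \<and> x = a / b)"

definition is_unit_in :: "('a::field) set \<Rightarrow> 'a \<Rightarrow> bool" where
  "is_unit_in D x \<longleftrightarrow> x \<in> D \<and> (\<exists>y\<in>D. x * y = 1)"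

definition submod :: "('a::field) set \<Rightarrow> 'a set \<Rightarrow> bool" where
  "submod D I \<longleftrightarrow> 0 \<in> I \<and> (\<forall>x\<in>I. \<forall>y\<in>I. x + y \<in> I) \<and> (\<forall>d\<in>D. \<forall>x\<in>I. d * x \<in> I)"

definition frac_ideal :: "('a::field) set \<Rightarrow> 'a set \<Rightarrow> bool" where
  "frac_ideal D I \<longleftrightarrow> submod D I \<and> I \<noteq> {0} \<and> (\<exists>d\<in>D. d \<noteq> 0 \<and> (\<forall>x\<in>I. d * x \<in> D))"

definition principal :: "('a::field) set \<Rightarrow> 'a \<Rightarrow> 'a set" where
  "principal D x = {x * d | d. d \<in> D}"

definition generated :: "('a::field) set \<Rightarrow> 'a set \<Rightarrow> 'a set" where
  "generated D S = {\<Sum>s\<in>S. c s * s | c. \<forall>s\<in>S. c s \<in> D}"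

definition fg_frac_ideal :: "('a::field) set \<Rightarrow> 'a set \<Rightarrow> bool" where
  "fg_frac_ideal D J \<longleftrightarrow> frac_ideal D J \<and> (\<exists>S. finite S \<and> J = generated D S)"

definition smult :: "('a::field) \<Rightarrow> 'a set \<Rightarrow> 'a set" where
  "smult x I = (\<lambda>y. x * y) ` I"

definition star_operation :: "('a::field) set \<Rightarrow> ('a set \<Rightarrow> 'a set) \<Rightarrow> bool" where
  "star_operation D st \<longleftrightarrow>
     (\<forall>I. frac_ideal D I \<longrightarrow> frac_ideal D (st I)) \<and>
     (\<forall>x. x \<noteq> 0 \<longrightarrow> st (principal D x) = principal D x) \<and>
     (\<forall>x I. x \<noteq> 0 \<and> frac_ideal D I \<longrightarrow> st (smult x I) = smult x (st I)) \<and>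
     (\<forall>I. frac_ideal D I \<longrightarrow> I \<subseteq> st I) \<and>
     (\<forall>I J. frac_ideal D I \<and> frac_ideal D J \<and> I \<subseteq> J \<longrightarrow> st I \<subseteq> st J) \<and>
     (\<forall>I. frac_ideal D I \<longrightarrow> st (st I) = st I)"

definition finite_character :: "('a::field) set \<Rightarrow> ('a set \<Rightarrow> 'a set) \<Rightarrow> bool" where
  "finite_character D st \<longleftrightarrow>
     (\<forall>I. frac_ideal D I \<longrightarrow> st I = \<Union>{st J | J. fg_frac_ideal D J \<and> J \<subseteq> I})"

definition star_ideal :: "('a::field) set \<Rightarrow> ('a set \<Rightarrow> 'a set) \<Rightarrow> 'a set \<Rightarrow> bool" where
  "star_ideal D st I \<longleftrightarrow> frac_ideal D I \<and> st I = I"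

definition star_finite_type :: "('a::field) set \<Rightarrow> ('a set \<Rightarrow> 'a set) \<Rightarrow> 'a set \<Rightarrow> bool" where
  "star_finite_type D st I \<longleftrightarrow> star_ideal D st I \<and> (\<exists>J. fg_frac_ideal D J \<and> I = st J)"

definition integral_star_ideal :: "('a::field) set \<Rightarrow> ('a set \<Rightarrow> 'a set) \<Rightarrow> 'a set \<Rightarrow> bool" where
  "integral_star_ideal D st I \<longleftrightarrow> star_ideal D st I \<and> I \<subseteq> D"

definition max_star_ideal :: "('a::field) set \<Rightarrow> ('a set \<Rightarrow> 'a set) \<Rightarrow> 'a set \<Rightarrow> bool" where
  "max_star_ideal D st M \<longleftrightarrow> integral_star_ideal D st M \<and> M \<noteq> D \<and>
     (\<forall>J. integral_star_ideal D st J \<and> J \<noteq> D \<and> M \<subseteq> J \<longrightarrow> J = M)"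

definition set_plus :: "('a::field) set \<Rightarrow> 'a set \<Rightarrow> 'a set" where
  "set_plus I J = {x + y | x y. x \<in> I \<and> y \<in> J}"

definition ideal_prod :: "('a::field) set \<Rightarrow> 'a set \<Rightarrow> 'a set" where
  "ideal_prod I J = {\<Sum>i<(n::nat). a i * b i | n a b. \<forall>i<n. a i \<in> I \<and> b i \<in> J}"

definition prod_ideals :: "('a::field) set \<Rightarrow> 'a set list \<Rightarrow> 'a set" where
  "prod_ideals D Is = foldr ideal_prod Is D"

definition ideal_power :: "('a::field) set \<Rightarrow> 'a set \<Rightarrow> nat \<Rightarrow> 'a set" where
  "ideal_power D I n = (ideal_prod I ^^ n) D"

definition star_homog :: "('a::field) set \<Rightarrow> ('a set \<Rightarrow> 'a set) \<Rightarrow> 'a set \<Rightarrow> bool" where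
  "star_homog D st I \<longleftrightarrow> integral_star_ideal D st I \<and> star_finite_type D st I \<and> I \<noteq> D \<and>
     (\<forall>J L. integral_star_ideal D st J \<and> star_finite_type D st J \<and> J \<noteq> D \<and> I \<subseteq> J \<and>
            integral_star_ideal D st L \<and> star_finite_type D st L \<and> L \<noteq> D \<and> I \<subseteq> L
            \<longrightarrow> st (set_plus J L) \<noteq> D)"

text \<open>The unique maximal star-ideal containing a star-homog ideal.\<close>
definition M_of :: "('a::field) set \<Rightarrow> ('a set \<Rightarrow> 'a set) \<Rightarrow> 'a set \<Rightarrow> 'a set" where
  "M_of D st I = (THE M. max_star_ideal D st M \<and> I \<subseteq> M)"

definition star_SH :: "('a::field) set \<Rightarrow> ('a set \<Rightarrow> 'a set) \<Rightarrow> bool" where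
  "star_SH D st \<longleftrightarrow> (\<forall>x\<in>D. x \<noteq> 0 \<and> \<not> is_unit_in D x \<longrightarrow>
     (\<exists>Is. Is \<noteq> [] \<and> (\<forall>I\<in>set Is. star_homog D st I) \<and> principal D x = st (prod_ideals D Is)))"

definition star_homog_type2 :: "('a::field) set \<Rightarrow> ('a set \<Rightarrow> 'a set) \<Rightarrow> 'a set \<Rightarrow> bool" where
  "star_homog_type2 D st I \<longleftrightarrow> star_homog D st I \<and>
     (\<exists>n>0. I = st (ideal_power D (M_of D st I) n))"

definition star_SH_type2 :: "('a::field) set \<Rightarrow> ('a set \<Rightarrow> 'a set) \<Rightarrow> bool" where
  "star_SH_type2 D st \<longleftrightarrow> (\<forall>x\<in>D. x \<noteq> 0 \<and> \<not> is_unit_in D x \<longrightarrow>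
     (\<exists>Is. Is \<noteq> [] \<and> (\<forall>I\<in>set Is. star_homog_type2 D st I) \<and> principal D x = st (prod_ideals D Is)))"

definition prime_ideal :: "('a::field) set \<Rightarrow> 'a set \<Rightarrow> bool" where
  "prime_ideal D P \<longleftrightarrow> submod D P \<and> P \<subseteq> D \<and> P \<noteq> D \<and>
     (\<forall>x\<in>D. \<forall>y\<in>D. x * y \<in> P \<longrightarrow> x \<in> P \<or> y \<in> P)"

definition height_one :: "('a::field) set \<Rightarrow> 'a set \<Rightarrow> bool" where
  "height_one D P \<longleftrightarrow> prime_ideal D P \<and> P \<noteq> {0} \<and>
     (\<forall>Q. prime_ideal D Q \<and> Q \<subseteq> P \<longrightarrow> Q = {0} \<or> Q = P)"

definition star_weakly_Krull :: "('a::field) set \<Rightarrow> ('a set \<Rightarrow> 'a set) \<Rightarrow> bool" where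
  "star_weakly_Krull D st \<longleftrightarrow> star_SH D st \<and> (\<forall>P. max_star_ideal D st P \<longrightarrow> height_one D P)"

definition localization :: "('a::field) set \<Rightarrow> 'a set \<Rightarrow> 'a set" where
  "localization D P = {a / s | a s. a \<in> D \<and> s \<in> D \<and> s \<notin> P}"

text \<open>R (a subring of the field 'a, whose quotient field is 'a) is a rank-one
  discrete valuation domain: it is the valuation ring of a surjective
  Z-valued valuation on 'a.\<close>
definition is_DVR :: "('a::field) set \<Rightarrow> bool" where
  "is_DVR R \<longleftrightarrow> (\<exists>v :: 'a \<Rightarrow> int.
     (\<forall>x y. x \<noteq> 0 \<and> y \<noteq> 0 \<longrightarrow> v (x * y) = v x + v y) \<and>
     (\<forall>x y. x \<noteq> 0 \<and> y \<noteq> 0 \<and> x + y \<noteq> 0 \<longrightarrow> min (v x) (v y) \<le> v (x + y)) \<and>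
     (\<forall>n. \<exists>x. x \<noteq> 0 \<and> v x = n) \<and>
     R = {x. x = 0 \<or> 0 \<le> v x})"

definition star_Krull :: "('a::field) set \<Rightarrow> ('a set \<Rightarrow> 'a set) \<Rightarrow> bool" where
  "star_Krull D st \<longleftrightarrow> star_weakly_Krull D st \<and>
     (\<forall>P. max_star_ideal D st P \<longrightarrow> is_DVR (localization D P))"

end

theory Submission
  imports Defs
begin

locale sd =
  fixes D :: "'a::field set"
  assumes sub: "subdomain D"
begin

lemma D0: "0 \<in> D" and D1: "1 \<in> D"
  and Dadd: "x \<in> D \<Longrightarrow> y \<in> D \<Longrightarrow> x + y \<in> D"
  and Dmul: "x \<in> D \<Longrightarrow> y \<in> D \<Longrightarrow> x * y \<in> D"
  and Dneg: "x \<in> D \<Longrightarrow> - x \<in> D"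
  using sub unfolding subdomain_def by auto

lemma Dpow: "x \<in> D \<Longrightarrow> x ^ n \<in> D"
  by (induction n) (auto intro: Dmul D1)

lemma submod_D: "submod D D"
  unfolding submod_def using D0 Dadd Dmul by auto

lemma submod_0: "submod D I \<Longrightarrow> 0 \<in> I"
  and submod_add: "submod D I \<Longrightarrow> x \<in> I \<Longrightarrow> y \<in> I \<Longrightarrow> x + y \<in> I"
  and submod_mul: "submod D I \<Longrightarrow> d \<in> D \<Longrightarrow> x \<in> I \<Longrightarrow> d * x \<in> I"
  unfolding submod_def by auto

lemma submod_mul': "submod D I \<Longrightarrow> d \<in> D \<Longrightarrow> x \<in> I \<Longrightarrow> x * d \<in> I"
  using submod_mul by (metis mult.commute)

lemma submod_sum: "submod D I \<Longrightarrow> (\<And>i. i < n \<Longrightarrow> f i \<in> I) \<Longrightarrow> (\<Sum>i<(n::nat). f i) \<in> I"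
  by (induction n) (auto intro: submod_0 submod_add)

lemma submod_sum_set: assumes "submod D I" "finite S" "\<And>s. s \<in> S \<Longrightarrow> f s \<in> I" shows "sum f S \<in> I"
  using assms(2,3) by (induction S rule: finite_induct) (auto intro: submod_0[OF assms(1)] submod_add[OF assms(1)])

lemma submod_1: "submod D I \<Longrightarrow> I \<subseteq> D \<Longrightarrow> 1 \<in> I \<Longrightarrow> I = D"
  using submod_mul[of I _ 1] by auto

lemma ip_mem: "a \<in> A \<Longrightarrow> b \<in> B \<Longrightarrow> a * b \<in> ideal_prod A B"
  unfolding ideal_prod_def
  by (rule CollectI, rule exI[of _ 1], rule exI[of _ "\<lambda>_. a"], rule exI[of _ "\<lambda>_. b"]) auto

lemma ip_intro: "(\<forall>i<n. f i \<in> A \<and> g i \<in> B) \<Longrightarrow> (\<Sum>i<(n::nat). f i * g i) \<in> ideal_prod A B"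
  unfolding ideal_prod_def
  by (rule CollectI, rule exI[of _ n], rule exI[of _ f], rule exI[of _ g]) simp

lemma ip_zero: "0 \<in> ideal_prod A B"
  unfolding ideal_prod_def by (rule CollectI, rule exI[of _ 0]) auto

lemma ip_sub: "submod D C \<Longrightarrow> (\<And>a b. a \<in> A \<Longrightarrow> b \<in> B \<Longrightarrow> a * b \<in> C) \<Longrightarrow> ideal_prod A B \<subseteq> C"
  unfolding ideal_prod_def by (auto intro!: submod_sum)

lemma ip_add1: assumes "x \<in> ideal_prod A B" "a \<in> A" "b \<in> B"
  shows "x + a * b \<in> ideal_prod A B"
proof -
  obtain n :: nat and f g where x: "x = (\<Sum>i<n. f i * g i)" "\<forall>i<n. f i \<in> A \<and> g i \<in> B"
    using assms(1) unfolding ideal_prod_def by blast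
  have "x + a * b = (\<Sum>i<Suc n. (f(n:=a)) i * (g(n:=b)) i)"
    using x(1) by (simp add: sum.lessThan_Suc)
  moreover have "\<forall>i<Suc n. (f(n:=a)) i \<in> A \<and> (g(n:=b)) i \<in> B"
    using x(2) assms by (auto simp: less_Suc_eq)
  ultimately show ?thesis using ip_intro[of "Suc n" "f(n:=a)" A "g(n:=b)" B] by simp
qed

lemma ip_add: assumes "x \<in> ideal_prod A B" "y \<in> ideal_prod A B"
  shows "x + y \<in> ideal_prod A B"
proof -
  obtain n :: nat and f g where y: "y = (\<Sum>i<n. f i * g i)" "\<forall>i<n. f i \<in> A \<and> g i \<in> B"
    using assms(2) unfolding ideal_prod_def by blast
  have "\<And>m. m \<le> n \<Longrightarrow> x + (\<Sum>i<m. f i * g i) \<in> ideal_prod A B"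
  proof -
    fix m show "m \<le> n \<Longrightarrow> x + (\<Sum>i<m. f i * g i) \<in> ideal_prod A B"
    proof (induction m)
      case 0 then show ?case using assms(1) by simp
    next
      case (Suc m)
      then have "x + (\<Sum>i<m. f i * g i) + f m * g m \<in> ideal_prod A B"
        using y(2) by (intro ip_add1) auto
      then show ?case by (simp add: add.assoc)
    qed
  qed
  then show ?thesis using y(1) by auto
qed

lemma ip_smul: assumes "submod D A" "d \<in> D" "x \<in> ideal_prod A B"
  shows "d * x \<in> ideal_prod A B"
proof -
  obtain n :: nat and f g where x: "x = (\<Sum>i<n. f i * g i)" "\<forall>i<n. f i \<in> A \<and> g i \<in> B"
    using assms(3) unfolding ideal_prod_def by blast
  have "d * x = (\<Sum>i<n. (d * f i) * g i)" using x(1) by (simp add: sum_distrib_left mult.assoc)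
  moreover have "\<forall>i<n. d * f i \<in> A \<and> g i \<in> B" using x(2) assms(1,2) submod_mul by blast
  ultimately show ?thesis using ip_intro[of n "\<lambda>i. d * f i" A g B] by simp
qed

lemma ip_submod: "submod D A \<Longrightarrow> submod D (ideal_prod A B)"
  unfolding submod_def[of D "ideal_prod A B"] using ip_zero ip_add ip_smul by blast

lemma ip_comm1: "ideal_prod A B \<subseteq> ideal_prod B A"
proof
  fix x assume "x \<in> ideal_prod A B"
  then obtain n :: nat and f g where x: "x = (\<Sum>i<n. f i * g i)" "\<forall>i<n. f i \<in> A \<and> g i \<in> B"
    unfolding ideal_prod_def by blast
  have "x = (\<Sum>i<n. g i * f i)" using x(1) by (simp add: mult.commute)
  then show "x \<in> ideal_prod B A" using ip_intro[of n g B f A] x(2) by simp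
qed

lemma ip_comm: "ideal_prod A B = ideal_prod B A"
  using ip_comm1 by blast

lemma ip_mono: "A \<subseteq> A' \<Longrightarrow> B \<subseteq> B' \<Longrightarrow> ideal_prod A B \<subseteq> ideal_prod A' B'"
  unfolding ideal_prod_def by blast

lemma ip_elem_mul: assumes "submod D A" "submod D C" "x \<in> ideal_prod A B" "c \<in> C"
  shows "x * c \<in> ideal_prod A (ideal_prod B C)"
proof -
  obtain n :: nat and f g where x: "x = (\<Sum>i<n. f i * g i)" "\<forall>i<n. f i \<in> A \<and> g i \<in> B"
    using assms(3) unfolding ideal_prod_def by blast
  have "x * c = (\<Sum>i<n. f i * (g i * c))" using x(1) by (simp add: sum_distrib_right mult.assoc)
  moreover have "(\<Sum>i<n. f i * (g i * c)) \<in> ideal_prod A (ideal_prod B C)"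
    by (rule submod_sum[OF ip_submod[OF assms(1)]]) (use x(2) assms(4) in \<open>auto intro!: ip_mem\<close>)
  ultimately show ?thesis by simp
qed

lemma ip_assoc: assumes "submod D A" "submod D B" "submod D C"
  shows "ideal_prod (ideal_prod A B) C = ideal_prod A (ideal_prod B C)"
proof
  show "ideal_prod (ideal_prod A B) C \<subseteq> ideal_prod A (ideal_prod B C)"
    by (rule ip_sub[OF ip_submod[OF assms(1)]]) (rule ip_elem_mul[OF assms(1,3)])
  have "ideal_prod (ideal_prod C B) A \<subseteq> ideal_prod C (ideal_prod B A)"
    by (rule ip_sub[OF ip_submod[OF assms(3)]]) (rule ip_elem_mul[OF assms(3,1)])
  then show "ideal_prod A (ideal_prod B C) \<subseteq> ideal_prod (ideal_prod A B) C"
    by (simp add: ip_comm)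
qed

lemma ip_lcomm: assumes "submod D A" "submod D B" "submod D C"
  shows "ideal_prod A (ideal_prod B C) = ideal_prod B (ideal_prod A C)"
proof -
  have "ideal_prod A (ideal_prod B C) = ideal_prod (ideal_prod A B) C" using ip_assoc[OF assms] by simp
  also have "\<dots> = ideal_prod (ideal_prod B A) C" using ip_comm[of A B] by simp
  also have "\<dots> = ideal_prod B (ideal_prod A C)" using ip_assoc[of B A C] assms by simp
  finally show ?thesis .
qed

lemma ip_D: assumes "submod D A" shows "ideal_prod A D = A"
proof
  show "ideal_prod A D \<subseteq> A" by (rule ip_sub[OF assms]) (use assms submod_mul' in auto)
  show "A \<subseteq> ideal_prod A D" using ip_mem[of _ A 1 D] D1 by force
qed

lemma ip_D': "submod D A \<Longrightarrow> ideal_prod D A = A"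
  using ip_D ip_comm[of D A] by simp

lemma ip_smult: assumes "c \<noteq> 0"
  shows "ideal_prod A (smult c B) = smult c (ideal_prod A B)"
proof
  show "ideal_prod A (smult c B) \<subseteq> smult c (ideal_prod A B)"
  proof
    fix x assume "x \<in> ideal_prod A (smult c B)"
    then obtain n :: nat and f g where x: "x = (\<Sum>i<n. f i * g i)" "\<forall>i<n. f i \<in> A \<and> g i \<in> smult c B"
      unfolding ideal_prod_def by blast
    have "\<forall>i<n. g i / c \<in> B" using x(2) assms unfolding smult_def by auto
    then have "(\<Sum>i<n. f i * (g i / c)) \<in> ideal_prod A B" using x(2) by (intro ip_intro) auto
    moreover have "x = c * (\<Sum>i<n. f i * (g i / c))" using x(1) assms
      by (simp add: sum_distrib_left)
    ultimately show "x \<in> smult c (ideal_prod A B)" unfolding smult_def by blast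
  qed
  show "smult c (ideal_prod A B) \<subseteq> ideal_prod A (smult c B)"
  proof
    fix x assume "x \<in> smult c (ideal_prod A B)"
    then obtain n :: nat and f g where x: "x = c * (\<Sum>i<n. f i * g i)" "\<forall>i<n. f i \<in> A \<and> g i \<in> B"
      unfolding ideal_prod_def smult_def by auto
    have "x = (\<Sum>i<n. f i * (c * g i))" using x(1) by (simp add: sum_distrib_left mult.left_commute)
    moreover have "\<forall>i<n. f i \<in> A \<and> c * g i \<in> smult c B" using x(2) unfolding smult_def by auto
    ultimately show "x \<in> ideal_prod A (smult c B)" using ip_intro[of n f A "\<lambda>i. c * g i" "smult c B"] by simp
  qed
qed

lemma principal_iff: "y \<in> principal D x \<longleftrightarrow> (\<exists>d\<in>D. y = x * d)"
  unfolding principal_def by blast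

lemma principal_submod: "x \<in> D \<Longrightarrow> submod D (principal D x)"
  unfolding submod_def
proof (intro conjI ballI)
  show "0 \<in> principal D x" unfolding principal_iff using D0 by force
next
  fix a b assume "a \<in> principal D x" "b \<in> principal D x"
  then obtain d e where "a = x * d" "b = x * e" "d \<in> D" "e \<in> D" unfolding principal_iff by blast
  then show "a + b \<in> principal D x" unfolding principal_iff using Dadd by (intro bexI[of _ "d+e"]) (auto simp: distrib_left)
next
  fix a b assume "a \<in> D" "b \<in> principal D x"
  then obtain e where "b = x * e" "e \<in> D" unfolding principal_iff by blast
  then show "a * b \<in> principal D x" unfolding principal_iff using Dmul \<open>a \<in> D\<close> by (intro bexI[of _ "a*e"]) auto
qed

lemma principal_mem: "x \<in> principal D x"
  unfolding principal_iff using D1 by force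

lemma principal_sub: "x \<in> D \<Longrightarrow> principal D x \<subseteq> D"
  using Dmul by (auto simp: principal_iff)

lemma principal_1: "principal D 1 = D"
  unfolding principal_def by auto

lemma frac_submod: "frac_ideal D I \<Longrightarrow> submod D I"
  unfolding frac_ideal_def by auto

lemma frac_nz: "frac_ideal D I \<Longrightarrow> \<exists>a\<in>I. a \<noteq> 0"
  unfolding frac_ideal_def using submod_0 by blast

lemma frac_den: "frac_ideal D I \<Longrightarrow> \<exists>d\<in>D. d \<noteq> 0 \<and> (\<forall>x\<in>I. d * x \<in> D)"
  unfolding frac_ideal_def by auto

lemma frac_idealI: "submod D I \<Longrightarrow> a \<in> I \<Longrightarrow> a \<noteq> 0 \<Longrightarrow> d \<in> D \<Longrightarrow> d \<noteq> 0 \<Longrightarrow> (\<forall>x\<in>I. d * x \<in> D) \<Longrightarrow> frac_ideal D I"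
  unfolding frac_ideal_def by (metis singletonD)

lemma frac_intI: "submod D I \<Longrightarrow> I \<subseteq> D \<Longrightarrow> a \<in> I \<Longrightarrow> a \<noteq> 0 \<Longrightarrow> frac_ideal D I"
  unfolding frac_ideal_def using D1 by (intro conjI) (auto intro!: bexI[of _ 1])

lemma frac_D: "frac_ideal D D"
  using frac_intI[OF submod_D] D1 by auto

lemma frac_principal: "x \<in> D \<Longrightarrow> x \<noteq> 0 \<Longrightarrow> frac_ideal D (principal D x)"
  using frac_intI[OF principal_submod principal_sub principal_mem] by auto

lemma frac_ip: assumes "frac_ideal D A" "frac_ideal D B" shows "frac_ideal D (ideal_prod A B)"
proof -
  obtain a b where ab: "a \<in> A" "a \<noteq> 0" "b \<in> B" "b \<noteq> 0" using frac_nz assms by blast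
  obtain d e where de: "d \<in> D" "d \<noteq> 0" "\<forall>x\<in>A. d * x \<in> D" "e \<in> D" "e \<noteq> 0" "\<forall>x\<in>B. e * x \<in> D"
    using frac_den assms by meson
  have "ideal_prod A B \<subseteq> {x. d * e * x \<in> D}"
  proof (rule ip_sub)
    show "submod D {x. d * e * x \<in> D}" unfolding submod_def using D0 Dadd Dmul
      by (auto simp: distrib_left mult.left_commute)
    fix x y assume "x \<in> A" "y \<in> B"
    then have "(d * x) * (e * y) \<in> D" using de Dmul by auto
    then show "x * y \<in> {x. d * e * x \<in> D}" by (simp add: ac_simps)
  qed
  moreover have "a * b \<in> ideal_prod A B" using ip_mem ab by auto
  ultimately show ?thesis using frac_idealI[OF ip_submod[where B=B, OF frac_submod[OF assms(1)]], where a="a*b" and d="d*e"] ab de Dmul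
    by auto
qed

lemma smult_iff: "y \<in> smult c A \<longleftrightarrow> (\<exists>a\<in>A. y = c * a)"
  unfolding smult_def by auto

lemma smult_submod: assumes "submod D A" shows "submod D (smult c A)"
  unfolding submod_def
proof (intro conjI ballI)
  show "0 \<in> smult c A" unfolding smult_iff using submod_0[OF assms] by force
next
  fix a b assume "a \<in> smult c A" "b \<in> smult c A"
  then obtain d e where "a = c * d" "b = c * e" "d \<in> A" "e \<in> A" unfolding smult_iff by blast
  then show "a + b \<in> smult c A" unfolding smult_iff using submod_add[OF assms] by (intro bexI[of _ "d+e"]) (auto simp: distrib_left)
next
  fix a b assume "a \<in> D" "b \<in> smult c A"
  then obtain e where "b = c * e" "e \<in> A" unfolding smult_iff by blast
  then show "a * b \<in> smult c A" unfolding smult_iff using submod_mul[OF assms] \<open>a \<in> D\<close> by (intro bexI[of _ "a*e"]) (auto simp: ac_simps)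
qed

lemma frac_smult: assumes "frac_ideal D A" "c \<noteq> 0" "w \<in> D" "w \<noteq> 0" "w * c \<in> D"
  shows "frac_ideal D (smult c A)"
proof -
  obtain a where a: "a \<in> A" "a \<noteq> 0" using frac_nz assms by blast
  obtain d where d: "d \<in> D" "d \<noteq> 0" "\<forall>x\<in>A. d * x \<in> D" using frac_den assms by meson
  have "\<forall>x\<in>smult c A. (w * d) * x \<in> D"
  proof
    fix x assume "x \<in> smult c A"
    then obtain y where "y \<in> A" "x = c * y" unfolding smult_iff by blast
    then have "(w * d) * x = (w * c) * (d * y)" by (simp add: ac_simps)
    moreover have "(w * c) * (d * y) \<in> D" using Dmul assms d \<open>y \<in> A\<close> by auto
    ultimately show "(w * d) * x \<in> D" by metis
  qed
  moreover have "c * a \<in> smult c A" "c * a \<noteq> 0" using a assms unfolding smult_iff by auto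
  ultimately show ?thesis using frac_idealI[OF smult_submod[OF frac_submod[OF assms(1)]], where a="c*a" and d="w*d"] d assms Dmul by auto
qed

lemma smult_smult: "smult a (smult b A) = smult (a * b) A"
  unfolding smult_def image_image by (simp add: mult.assoc)

lemma smult_principal: "smult c (principal D x) = principal D (c * x)"
proof
  show "smult c (principal D x) \<subseteq> principal D (c * x)"
  proof
    fix y assume "y \<in> smult c (principal D x)"
    then obtain d where "d \<in> D" "y = c * (x * d)" by (auto simp: smult_iff principal_iff)
    then show "y \<in> principal D (c * x)" unfolding principal_iff by (intro bexI[of _ d]) (auto simp: mult.assoc)
  qed
  show "principal D (c * x) \<subseteq> smult c (principal D x)"
  proof
    fix y assume "y \<in> principal D (c * x)"
    then obtain d where "d \<in> D" "y = c * x * d" by (auto simp: principal_iff)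
    moreover have "x * d \<in> principal D x" using \<open>d \<in> D\<close> unfolding principal_iff by auto
    ultimately show "y \<in> smult c (principal D x)" unfolding smult_iff by (intro bexI[of _ "x*d"]) (auto simp: mult.assoc)
  qed
qed

lemma smult_1: "smult 1 A = A"
  unfolding smult_def by auto

lemma smult_mono: "A \<subseteq> B \<Longrightarrow> smult c A \<subseteq> smult c B"
  unfolding smult_def by auto

lemma smult_sub_ip: "a \<in> A \<Longrightarrow> smult a B \<subseteq> ideal_prod A B"
  by (auto simp: smult_iff intro: ip_mem)

end

locale so = sd +
  fixes st :: "'a::field set \<Rightarrow> 'a set"
  assumes so: "star_operation D st" and fc: "finite_character D st"
begin

lemmas ops = so[unfolded star_operation_def]
lemma st_frac: "frac_ideal D I \<Longrightarrow> frac_ideal D (st I)"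
  using ops[THEN conjunct1] by blast
lemma st_principal: "x \<noteq> 0 \<Longrightarrow> st (principal D x) = principal D x"
  using ops[THEN conjunct2, THEN conjunct1] by blast
lemma st_smult: "x \<noteq> 0 \<Longrightarrow> frac_ideal D I \<Longrightarrow> st (smult x I) = smult x (st I)"
  using ops[THEN conjunct2, THEN conjunct2, THEN conjunct1] by blast
lemma st_ext: "frac_ideal D I \<Longrightarrow> I \<subseteq> st I"
  using ops[THEN conjunct2, THEN conjunct2, THEN conjunct2, THEN conjunct1] by blast
lemma st_mono: "frac_ideal D I \<Longrightarrow> frac_ideal D J \<Longrightarrow> I \<subseteq> J \<Longrightarrow> st I \<subseteq> st J"
  using ops[THEN conjunct2, THEN conjunct2, THEN conjunct2, THEN conjunct2, THEN conjunct1] by blast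
lemma st_idem: "frac_ideal D I \<Longrightarrow> st (st I) = st I"
  using ops[THEN conjunct2, THEN conjunct2, THEN conjunct2, THEN conjunct2, THEN conjunct2] by blast

lemma st_D: "st D = D"
  using st_principal[of 1] principal_1 by simp

lemma st_int: "frac_ideal D I \<Longrightarrow> I \<subseteq> D \<Longrightarrow> st I \<subseteq> D"
  using st_mono[OF _ frac_D] st_D by auto

lemma st_submod: "frac_ideal D I \<Longrightarrow> submod D (st I)"
  using st_frac frac_submod by blast

lemma fc_elem: assumes "frac_ideal D I" "x \<in> st I"
  shows "\<exists>J. fg_frac_ideal D J \<and> J \<subseteq> I \<and> x \<in> st J"
  using fc assms unfolding finite_character_def by blast

lemma S3: assumes "frac_ideal D A" "frac_ideal D B"
  shows "st (ideal_prod A (st B)) = st (ideal_prod A B)"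
proof
  have fAB: "frac_ideal D (ideal_prod A B)" using frac_ip assms by blast
  have fAsB: "frac_ideal D (ideal_prod A (st B))" using frac_ip assms st_frac by blast
  show "st (ideal_prod A B) \<subseteq> st (ideal_prod A (st B))"
    using st_mono[OF fAB fAsB] ip_mono[OF order_refl st_ext[OF assms(2)]] by blast
  have "ideal_prod A (st B) \<subseteq> st (ideal_prod A B)"
  proof (rule ip_sub[OF st_submod[OF fAB]])
    fix a b assume a: "a \<in> A" and b: "b \<in> st B"
    show "a * b \<in> st (ideal_prod A B)"
    proof (cases "a = 0")
      case True then show ?thesis using submod_0[OF st_submod[OF fAB]] by simp
    next
      case False
      obtain d where d: "d \<in> D" "d \<noteq> 0" "\<forall>x\<in>A. d * x \<in> D" using frac_den assms(1) by meson
      have fs: "frac_ideal D (smult a B)" using frac_smult[OF assms(2) False d(1,2)] d(3) a by auto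
      have "a * b \<in> smult a (st B)" unfolding smult_iff using b by auto
      also have "\<dots> = st (smult a B)" using st_smult[OF False assms(2)] by simp
      also have "\<dots> \<subseteq> st (ideal_prod A B)" using st_mono[OF fs fAB smult_sub_ip[OF a]] .
      finally show ?thesis .
    qed
  qed
  then show "st (ideal_prod A (st B)) \<subseteq> st (ideal_prod A B)"
    using st_mono[OF fAsB st_frac[OF fAB]] st_idem[OF fAB] by blast
qed

lemma S3': assumes "frac_ideal D A" "frac_ideal D B"
  shows "st (ideal_prod (st A) B) = st (ideal_prod A B)"
  using S3[OF assms(2,1)] ip_comm by metis


lemma isi_frac: "integral_star_ideal D st I \<Longrightarrow> frac_ideal D I"
  and isi_sub: "integral_star_ideal D st I \<Longrightarrow> I \<subseteq> D"
  and isi_st: "integral_star_ideal D st I \<Longrightarrow> st I = I"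
  unfolding integral_star_ideal_def star_ideal_def by auto

lemma isiI: "frac_ideal D I \<Longrightarrow> I \<subseteq> D \<Longrightarrow> integral_star_ideal D st (st I)"
  unfolding integral_star_ideal_def star_ideal_def using st_frac st_idem st_int by auto

lemma max_isi: "max_star_ideal D st P \<Longrightarrow> integral_star_ideal D st P"
  and max_neq: "max_star_ideal D st P \<Longrightarrow> P \<noteq> D"
  and max_max: "max_star_ideal D st P \<Longrightarrow> integral_star_ideal D st J \<Longrightarrow> J \<noteq> D \<Longrightarrow> P \<subseteq> J \<Longrightarrow> J = P"
  unfolding max_star_ideal_def by auto

lemma isi_1: "integral_star_ideal D st P \<Longrightarrow> P \<noteq> D \<Longrightarrow> 1 \<notin> P"
  using submod_1 isi_frac isi_sub frac_submod by blast

lemma max_1: "max_star_ideal D st P \<Longrightarrow> 1 \<notin> P"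
  using isi_1 max_isi max_neq by blast

lemma set_plus_iff: "x \<in> set_plus A B \<longleftrightarrow> (\<exists>a\<in>A. \<exists>b\<in>B. x = a + b)"
  unfolding set_plus_def by blast

lemma set_plus_submod: assumes "submod D A" "submod D B" shows "submod D (set_plus A B)"
  unfolding submod_def
proof (intro conjI ballI)
  show "0 \<in> set_plus A B" unfolding set_plus_iff using submod_0 assms by force
next
  fix x y assume "x \<in> set_plus A B" "y \<in> set_plus A B"
  then obtain a b a' b' where "a \<in> A" "b \<in> B" "a' \<in> A" "b' \<in> B" "x = a + b" "y = a' + b'"
    unfolding set_plus_iff by blast
  then show "x + y \<in> set_plus A B" unfolding set_plus_iff using submod_add assms
    by (intro bexI[of _ "a+a'"] bexI[of _ "b+b'"]) (auto simp: ac_simps)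
next
  fix d x assume "d \<in> D" "x \<in> set_plus A B"
  then obtain a b where "a \<in> A" "b \<in> B" "x = a + b" unfolding set_plus_iff by blast
  then show "d * x \<in> set_plus A B" unfolding set_plus_iff using submod_mul assms \<open>d \<in> D\<close>
    by (intro bexI[of _ "d*a"] bexI[of _ "d*b"]) (auto simp: distrib_left)
qed

lemma set_plus_left: "submod D B \<Longrightarrow> A \<subseteq> set_plus A B"
  unfolding set_plus_def using submod_0 by force

lemma set_plus_int: "A \<subseteq> D \<Longrightarrow> B \<subseteq> D \<Longrightarrow> set_plus A B \<subseteq> D"
  unfolding set_plus_def using Dadd by auto

lemma set_plus_frac: assumes "frac_ideal D A" "frac_ideal D B" "A \<subseteq> D" "B \<subseteq> D"
  shows "frac_ideal D (set_plus A B)"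
proof -
  obtain a where "a \<in> A" "a \<noteq> 0" using frac_nz assms by blast
  then show ?thesis using frac_intI[OF set_plus_submod set_plus_int, of A B a] assms frac_submod
      set_plus_left[of B A] by auto
qed

lemma max_prime: assumes P: "max_star_ideal D st P" shows "prime_ideal D P"
proof -
  have iP: "integral_star_ideal D st P" using max_isi P .
  have fP: "frac_ideal D P" and sP: "P \<subseteq> D" and stP: "st P = P" using isi_frac isi_sub isi_st iP by auto
  have smP: "submod D P" using frac_submod fP .
  have "x \<in> P \<or> y \<in> P" if xy: "x \<in> D" "y \<in> D" "x * y \<in> P" for x y
  proof (rule ccontr)
    assume "\<not> (x \<in> P \<or> y \<in> P)"
    then have nx: "x \<notin> P" and ny: "y \<notin> P" by auto
    have y0: "y \<noteq> 0" using ny submod_0[OF smP] by auto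
    let ?A = "set_plus P (principal D x)"
    have smA: "submod D ?A" using set_plus_submod smP principal_submod xy by blast
    have AD: "?A \<subseteq> D" using set_plus_int sP principal_sub xy by blast
    obtain p where p: "p \<in> P" "p \<noteq> 0" using frac_nz fP by blast
    have PA: "P \<subseteq> ?A" using set_plus_left principal_submod xy by blast
    have fA: "frac_ideal D ?A" using frac_intI[OF smA AD, of p] p PA by auto
    have istA: "integral_star_ideal D st (st ?A)" using isiI fA AD by blast
    have xA: "x \<in> ?A" unfolding set_plus_iff using submod_0[OF smP] principal_mem by force
    have "st ?A = D"
    proof (rule ccontr)
      assume "st ?A \<noteq> D"
      then have "st ?A = P" using max_max[OF P istA] PA st_ext[OF fA] by blast
      then show False using xA st_ext[OF fA] nx by blast
    qed
    then have "1 \<in> st ?A" using D1 by simp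
    then have "y \<in> smult y (st ?A)" unfolding smult_iff by force
    also have "\<dots> = st (smult y ?A)" using st_smult[OF y0 fA] by simp
    also have "\<dots> \<subseteq> st P"
    proof (rule st_mono[OF frac_smult[OF fA y0 D1] fP])
      show "1 * y \<in> D" using xy by simp
      show "(1::'a) \<noteq> 0" by simp
      show "smult y ?A \<subseteq> P"
      proof
        fix z assume "z \<in> smult y ?A"
        then obtain a d where "a \<in> P" "d \<in> D" "z = y * (a + x * d)"
          by (auto simp: smult_iff set_plus_iff principal_iff)
        then have "z = y * a + (x * y) * d" by (simp add: algebra_simps)
        moreover have "y * a \<in> P" "(x * y) * d \<in> P" using submod_mul submod_mul' smP xy \<open>a \<in> P\<close> \<open>d \<in> D\<close> by auto
        ultimately show "z \<in> P" using submod_add smP by auto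
      qed
    qed
    finally show False using ny stP by simp
  qed
  moreover have "P \<noteq> D" using max_neq P .
  ultimately show ?thesis unfolding prime_ideal_def using smP sP by blast
qed

lemma prime_pow: "prime_ideal D P \<Longrightarrow> x \<in> D \<Longrightarrow> x ^ n \<in> P \<Longrightarrow> x \<in> P"
proof (induction n)
  case 0
  then have "1 \<in> P" by simp
  then have "x * 1 \<in> P" using 0 unfolding prime_ideal_def submod_def by blast
  then show ?case by simp
next
  case (Suc n)
  then show ?case unfolding prime_ideal_def using Dpow by (metis power_Suc)
qed

lemma gen_iff: "x \<in> generated D S \<longleftrightarrow> (\<exists>c. (\<forall>s\<in>S. c s \<in> D) \<and> x = (\<Sum>s\<in>S. c s * s))"
  unfolding generated_def by blast

lemma gen_submod: "submod D (generated D S)"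
  unfolding submod_def
proof (intro conjI ballI)
  show "0 \<in> generated D S" unfolding gen_iff using D0 by (intro exI[of _ "\<lambda>_. 0"]) auto
next
  fix x y assume "x \<in> generated D S" "y \<in> generated D S"
  then obtain c e where "\<forall>s\<in>S. c s \<in> D" "x = (\<Sum>s\<in>S. c s * s)" "\<forall>s\<in>S. e s \<in> D" "y = (\<Sum>s\<in>S. e s * s)"
    unfolding gen_iff by blast
  then show "x + y \<in> generated D S" unfolding gen_iff using Dadd
    by (intro exI[of _ "\<lambda>s. c s + e s"]) (auto simp: sum.distrib distrib_right)
next
  fix d x assume "d \<in> D" "x \<in> generated D S"
  then obtain c where "\<forall>s\<in>S. c s \<in> D" "x = (\<Sum>s\<in>S. c s * s)" unfolding gen_iff by blast
  then show "d * x \<in> generated D S" unfolding gen_iff using Dmul \<open>d \<in> D\<close>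
    by (intro exI[of _ "\<lambda>s. d * c s"]) (auto simp: sum_distrib_left mult.assoc)
qed

lemma gen_sub: assumes "finite S" shows "S \<subseteq> generated D S"
proof
  fix t assume t: "t \<in> S"
  have "(\<Sum>s\<in>S. (if s = t then 1 else 0) * s) = (\<Sum>s\<in>S. if s = t then s else 0)"
    by (rule sum.cong) auto
  also have "\<dots> = t" using assms t by (simp add: sum.delta')
  finally show "t \<in> generated D S" unfolding gen_iff using D0 D1
    by (intro exI[of _ "\<lambda>s. if s = t then 1 else 0"]) auto
qed

lemma gen_least: assumes "finite S" "submod D C" "S \<subseteq> C" shows "generated D S \<subseteq> C"
proof
  fix x assume "x \<in> generated D S"
  then obtain c where "\<forall>s\<in>S. c s \<in> D" "x = (\<Sum>s\<in>S. c s * s)" unfolding gen_iff by blast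
  then show "x \<in> C" using assms by (auto intro!: submod_sum_set[OF assms(2,1)] submod_mul[OF assms(2)])
qed

lemma fg_gen: "fg_frac_ideal D J \<Longrightarrow> \<exists>S. finite S \<and> J = generated D S"
  and fg_frac: "fg_frac_ideal D J \<Longrightarrow> frac_ideal D J"
  unfolding fg_frac_ideal_def by auto


lemma exists_max: assumes J: "integral_star_ideal D st J" "J \<noteq> D"
  shows "\<exists>M. max_star_ideal D st M \<and> J \<subseteq> M"
proof -
  let ?A = "{X. integral_star_ideal D st X \<and> X \<noteq> D \<and> J \<subseteq> X}"
  have "\<exists>M\<in>?A. \<forall>X\<in>?A. M \<subseteq> X \<longrightarrow> X = M"
  proof (rule subset_Zorn_nonempty)
    show "?A \<noteq> {}" using J by blast
  next
    fix C assume Cne: "C \<noteq> {}" and ch: "subset.chain ?A C"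
    have CA: "C \<subseteq> ?A" and lin: "\<forall>X\<in>C. \<forall>Y\<in>C. X \<subseteq> Y \<or> Y \<subseteq> X"
      using ch unfolding subset_chain_def by auto
    let ?U = "\<Union>C"
    obtain X0 where X0: "X0 \<in> C" using Cne by blast
    have memC: "integral_star_ideal D st X" "X \<noteq> D" "J \<subseteq> X" if "X \<in> C" for X
      using CA that by auto
    have smX: "submod D X" if "X \<in> C" for X using memC(1)[OF that] isi_frac frac_submod by blast
    have JU: "J \<subseteq> ?U" using memC(3) X0 by blast
    have UD: "?U \<subseteq> D" using memC(1) isi_sub by blast
    have smU: "submod D ?U"
      unfolding submod_def
    proof (intro conjI ballI)
      show "0 \<in> ?U" using smX[OF X0] submod_0 X0 by blast
    next
      fix x y assume "x \<in> ?U" "y \<in> ?U"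
      then obtain X Y where "X \<in> C" "Y \<in> C" "x \<in> X" "y \<in> Y" by blast
      then show "x + y \<in> ?U" using lin smX submod_add
        by (metis Union_iff subsetD)
    next
      fix d x assume "d \<in> D" "x \<in> ?U"
      then obtain X where "X \<in> C" "x \<in> X" by blast
      then show "d * x \<in> ?U" using smX submod_mul \<open>d \<in> D\<close> by blast
    qed
    have n1: "1 \<notin> ?U" using memC(1,2) isi_1 by blast
    have fJ: "frac_ideal D J" using isi_frac J by blast
    obtain a where a: "a \<in> J" "a \<noteq> 0" using frac_nz fJ by blast
    have fU: "frac_ideal D ?U" using frac_intI[OF smU UD, of a] a JU by auto
    have "st ?U \<subseteq> ?U"
    proof
      fix x assume "x \<in> st ?U"
      then obtain G where G: "fg_frac_ideal D G" "G \<subseteq> ?U" "x \<in> st G" using fc_elem fU by blast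
      obtain S where S: "finite S" "G = generated D S" using fg_gen G(1) by blast
      have SU: "S \<subseteq> ?U" using gen_sub S G(2) by blast
      obtain X where X: "X \<in> C" "S \<subseteq> X"
      proof (cases "S = {}")
        case True then show ?thesis using that X0 by blast
      next
        case False
        show ?thesis using finite_subset_Union_chain[OF S(1) SU Cne ch] that by blast
      qed
      have "G \<subseteq> X" using gen_least[OF S(1) smX[OF X(1)] X(2)] S(2) by simp
      then have "st G \<subseteq> st X" using st_mono fg_frac G(1) isi_frac memC(1)[OF X(1)] by blast
      then show "x \<in> ?U" using G(3) isi_st memC(1)[OF X(1)] X(1) by blast
    qed
    then have "st ?U = ?U" using st_ext[OF fU] by blast
    then have "integral_star_ideal D st ?U" unfolding integral_star_ideal_def star_ideal_def using fU UD by blast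
    then show "?U \<in> ?A" using n1 JU D1 by auto
  qed
  then obtain M where M: "M \<in> ?A" "\<forall>X\<in>?A. M \<subseteq> X \<longrightarrow> X = M" by blast
  then have "max_star_ideal D st M" unfolding max_star_ideal_def by blast
  then show ?thesis using M by blast
qed

lemma homog_isi: "star_homog D st I \<Longrightarrow> integral_star_ideal D st I"
  and homog_neq: "star_homog D st I \<Longrightarrow> I \<noteq> D"
  and homog_sft: "star_homog D st I \<Longrightarrow> star_finite_type D st I"
  unfolding star_homog_def by auto

lemma homog_unique: assumes H: "star_homog D st I" and M1: "max_star_ideal D st M1"
  and M2: "max_star_ideal D st M2" and IM1: "I \<subseteq> M1" and IM2: "I \<subseteq> M2"
  shows "M1 = M2"
proof (rule ccontr)
  assume ne: "M1 \<noteq> M2"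
  have i1: "integral_star_ideal D st M1" and i2: "integral_star_ideal D st M2" using max_isi M1 M2 by auto
  have f1: "frac_ideal D M1" "M1 \<subseteq> D" "submod D M1" "st M1 = M1"
    using isi_frac isi_sub isi_st frac_submod i1 by auto
  have f2: "frac_ideal D M2" "M2 \<subseteq> D" "submod D M2" "st M2 = M2"
    using isi_frac isi_sub isi_st frac_submod i2 by auto
  let ?Sp = "set_plus M1 M2"
  have fSp: "frac_ideal D ?Sp" using set_plus_frac f1 f2 by blast
  have SpD: "?Sp \<subseteq> D" using set_plus_int f1 f2 by blast
  have M1Sp: "M1 \<subseteq> st ?Sp" using set_plus_left[OF f2(3)] st_ext[OF fSp] by blast
  have "M2 \<subseteq> ?Sp"
  proof
    fix m assume "m \<in> M2"
    then show "m \<in> ?Sp" unfolding set_plus_iff using submod_0[OF f1(3)] by (intro bexI[of _ 0] bexI[of _ m]) auto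
  qed
  then have M2Sp: "M2 \<subseteq> st ?Sp" using st_ext[OF fSp] by blast
  have "st ?Sp = D"
  proof (rule ccontr)
    assume "st ?Sp \<noteq> D"
    then have "st ?Sp = M1" using max_max[OF M1 isiI[OF fSp SpD]] M1Sp by blast
    moreover have "st ?Sp = M2" using max_max[OF M2 isiI[OF fSp SpD]] M2Sp \<open>st ?Sp \<noteq> D\<close> by blast
    ultimately show False using ne by simp
  qed
  then have "1 \<in> st ?Sp" using D1 by simp
  then obtain G where G: "fg_frac_ideal D G" "G \<subseteq> ?Sp" "1 \<in> st G" using fc_elem fSp by blast
  obtain S where S: "finite S" "G = generated D S" using fg_gen G(1) by blast
  have SSp: "S \<subseteq> ?Sp" using gen_sub[OF S(1)] S(2) G(2) by blast
  have "\<forall>s\<in>S. \<exists>p. fst p \<in> M1 \<and> snd p \<in> M2 \<and> s = fst p + snd p"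
  proof
    fix s assume "s \<in> S"
    then have "s \<in> ?Sp" using SSp by blast
    then obtain a b where "a \<in> M1" "b \<in> M2" "s = a + b" unfolding set_plus_iff by blast
    then show "\<exists>p. fst p \<in> M1 \<and> snd p \<in> M2 \<and> s = fst p + snd p" by (intro exI[of _ "(a,b)"]) auto
  qed
  then have "\<exists>h. \<forall>s\<in>S. fst (h s) \<in> M1 \<and> snd (h s) \<in> M2 \<and> s = fst (h s) + snd (h s)"
    by (rule bchoice)
  then obtain h where h: "\<forall>s\<in>S. fst (h s) \<in> M1 \<and> snd (h s) \<in> M2 \<and> s = fst (h s) + snd (h s)"
    by blast
  define f where "f = (\<lambda>s. fst (h s))"
  define g where "g = (\<lambda>s. snd (h s))"
  have f: "\<forall>s\<in>S. f s \<in> M1" and g: "\<forall>s\<in>S. g s \<in> M2 \<and> s = f s + g s" using h unfolding f_def g_def by auto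
  obtain K where K: "fg_frac_ideal D K" "I = st K" using homog_sft[OF H] unfolding star_finite_type_def by blast
  obtain SK where SK: "finite SK" "K = generated D SK" using fg_gen K(1) by blast
  have fK: "frac_ideal D K" using fg_frac K(1) .
  have KI: "K \<subseteq> I" using st_ext[OF fK] K(2) by simp
  have SKK: "SK \<subseteq> K" using gen_sub[OF SK(1)] SK(2) by simp
  obtain k where k: "k \<in> K" "k \<noteq> 0" using frac_nz fK by blast
  have build: "\<exists>J. integral_star_ideal D st J \<and> star_finite_type D st J \<and> J \<noteq> D \<and> I \<subseteq> J \<and> generated D (SK \<union> hh ` S) \<subseteq> J"
    if M: "max_star_ideal D st M" "I \<subseteq> M" and hM: "hh ` S \<subseteq> M" for M hh
  proof -
    have iM: "integral_star_ideal D st M" using max_isi M(1) .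
    have fM: "frac_ideal D M" "M \<subseteq> D" "submod D M" "st M = M"
      using isi_frac isi_sub isi_st frac_submod iM by auto
    let ?G = "generated D (SK \<union> hh ` S)"
    have fin: "finite (SK \<union> hh ` S)" using SK(1) S(1) by simp
    have GM: "?G \<subseteq> M" using gen_least[OF fin fM(3)] SKK KI M(2) hM by blast
    have KG: "K \<subseteq> ?G" using gen_least[OF SK(1) gen_submod] gen_sub[OF fin] SK(2) by blast
    have GD: "?G \<subseteq> D" using GM fM(2) by blast
    have kG: "k \<in> ?G" using KG k(1) by blast
    have fG: "frac_ideal D ?G" using frac_intI[OF gen_submod GD kG k(2)] .
    have fgG: "fg_frac_ideal D ?G" unfolding fg_frac_ideal_def using fG fin by blast
    have i: "integral_star_ideal D st (st ?G)" using isiI[OF fG GD] .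
    have stGM: "st ?G \<subseteq> M" using st_mono[OF fG fM(1) GM] fM(4) by simp
    have "st ?G \<noteq> D"
    proof
      assume "st ?G = D"
      then have "M = D" using stGM fM(2) by blast
      then show False using max_neq[OF M(1)] by simp
    qed
    moreover have "I \<subseteq> st ?G" using st_mono[OF fK fG KG] K(2) by simp
    moreover have "star_finite_type D st (st ?G)" unfolding star_finite_type_def
      using i fgG unfolding integral_star_ideal_def by blast
    ultimately show ?thesis using i st_ext[OF fG] by blast
  qed
  obtain J1 where J1: "integral_star_ideal D st J1" "star_finite_type D st J1" "J1 \<noteq> D" "I \<subseteq> J1"
    "generated D (SK \<union> f ` S) \<subseteq> J1" using build[OF M1 IM1, of f] f by blast
  obtain J2 where J2: "integral_star_ideal D st J2" "star_finite_type D st J2" "J2 \<noteq> D" "I \<subseteq> J2"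
    "generated D (SK \<union> g ` S) \<subseteq> J2" using build[OF M2 IM2, of g] g by blast
  have fJ1: "frac_ideal D J1" "J1 \<subseteq> D" "submod D J1" using isi_frac isi_sub frac_submod J1(1) by auto
  have fJ2: "frac_ideal D J2" "J2 \<subseteq> D" "submod D J2" using isi_frac isi_sub frac_submod J2(1) by auto
  let ?T = "set_plus J1 J2"
  have fT: "frac_ideal D ?T" using set_plus_frac fJ1 fJ2 by blast
  have TD: "?T \<subseteq> D" using set_plus_int fJ1 fJ2 by blast
  have ST: "S \<subseteq> ?T"
  proof
    fix s assume s: "s \<in> S"
    have "f s \<in> J1" using J1(5) gen_sub[of "SK \<union> f ` S"] SK(1) S(1) s by blast
    moreover have "g s \<in> J2" using J2(5) gen_sub[of "SK \<union> g ` S"] SK(1) S(1) s by blast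
    ultimately show "s \<in> ?T" unfolding set_plus_iff using g s by blast
  qed
  have "G \<subseteq> ?T" using gen_least[OF S(1) set_plus_submod[OF fJ1(3) fJ2(3)] ST] S(2) by simp
  then have "1 \<in> st ?T" using st_mono[OF fg_frac[OF G(1)] fT] G(3) by blast
  then have "st ?T = D" using submod_1 st_submod[OF fT] st_int[OF fT TD] by blast
  moreover have "st ?T \<noteq> D" using H J1 J2 unfolding star_homog_def by blast
  ultimately show False by simp
qed

lemma M_of_eq: assumes "star_homog D st I" "max_star_ideal D st P" "I \<subseteq> P"
  shows "M_of D st I = P"
  unfolding M_of_def
proof (rule the_equality)
  show "max_star_ideal D st P \<and> I \<subseteq> P" using assms by blast
  show "\<And>M. max_star_ideal D st M \<and> I \<subseteq> M \<Longrightarrow> M = P" using homog_unique assms by blast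
qed

lemma ipow_0: "ideal_power D A 0 = D"
  unfolding ideal_power_def by simp

lemma ipow_Suc: "ideal_power D A (Suc n) = ideal_prod A (ideal_power D A n)"
  unfolding ideal_power_def by simp

lemma ipow_frac: assumes "frac_ideal D A" "A \<subseteq> D"
  shows "frac_ideal D (ideal_power D A n) \<and> ideal_power D A n \<subseteq> D"
proof (induction n)
  case 0 then show ?case using frac_D ipow_0 by simp
next
  case (Suc n)
  have "ideal_prod A (ideal_power D A n) \<subseteq> D"
    by (rule ip_sub[OF submod_D]) (use Suc assms Dmul in auto)
  then show ?case using frac_ip[OF assms(1)] Suc ipow_Suc by simp
qed

lemma ipow_add: assumes "frac_ideal D A" "A \<subseteq> D"
  shows "ideal_power D A (m + n) = ideal_prod (ideal_power D A m) (ideal_power D A n)"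
proof (induction m)
  case 0 then show ?case using ipow_0 ip_D' frac_submod ipow_frac[OF assms] by simp
next
  case (Suc m)
  have "ideal_power D A (Suc m + n) = ideal_prod A (ideal_prod (ideal_power D A m) (ideal_power D A n))"
    using Suc ipow_Suc by simp
  also have "\<dots> = ideal_prod (ideal_prod A (ideal_power D A m)) (ideal_power D A n)"
    using ip_assoc frac_submod ipow_frac[OF assms] assms by metis
  finally show ?case using ipow_Suc by simp
qed

lemma ipow_sub: assumes "frac_ideal D A" "A \<subseteq> D" "1 \<le> n" shows "ideal_power D A n \<subseteq> A"
proof -
  obtain k where n: "n = Suc k" using assms(3) by (cases n) auto
  show ?thesis unfolding n ipow_Suc
    by (rule ip_sub[OF frac_submod[OF assms(1)]]) (use ipow_frac[OF assms(1,2)] frac_submod[OF assms(1)] submod_mul' in blast)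
qed

lemma ipow_anti: assumes "frac_ideal D A" "A \<subseteq> D" "m \<le> n"
  shows "ideal_power D A n \<subseteq> ideal_power D A m"
proof -
  have "n = m + (n - m)" using assms by simp
  then have "ideal_power D A n = ideal_prod (ideal_power D A m) (ideal_power D A (n - m))"
    using ipow_add[OF assms(1,2)] by metis
  also have "\<dots> \<subseteq> ideal_power D A m"
    by (rule ip_sub) (use ipow_frac[OF assms(1,2)] frac_submod submod_mul' in blast)+
  finally show ?thesis .
qed

lemma ipow_1: assumes "frac_ideal D A" shows "ideal_power D A 1 = A"
  using ipow_Suc[of A 0] ipow_0 ip_D frac_submod assms by simp

lemma pow_in_ipow: "p \<in> A \<Longrightarrow> p ^ n \<in> ideal_power D A n"
  by (induction n) (auto simp: ipow_0 ipow_Suc D1 intro: ip_mem)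

lemma prod_Cons: "prod_ideals D (I # Is) = ideal_prod I (prod_ideals D Is)"
  and prod_Nil: "prod_ideals D [] = D"
  unfolding prod_ideals_def by auto

lemma prod_frac: "(\<forall>I\<in>set Is. frac_ideal D I \<and> I \<subseteq> D) \<Longrightarrow> frac_ideal D (prod_ideals D Is) \<and> prod_ideals D Is \<subseteq> D"
proof (induction Is)
  case Nil then show ?case using prod_Nil frac_D by simp
next
  case (Cons I Is)
  have "ideal_prod I (prod_ideals D Is) \<subseteq> D"
    by (rule ip_sub[OF submod_D]) (use Cons Dmul in auto)
  then show ?case using frac_ip Cons prod_Cons by simp
qed

lemma principal_prod: assumes "x \<in> D" "y \<in> D"
  shows "ideal_prod (principal D x) (principal D y) = principal D (x * y)"
proof
  show "ideal_prod (principal D x) (principal D y) \<subseteq> principal D (x * y)"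
  proof (rule ip_sub[OF principal_submod])
    show "x * y \<in> D" using Dmul assms by auto
    fix a b assume "a \<in> principal D x" "b \<in> principal D y"
    then obtain d e where "d \<in> D" "e \<in> D" "a = x * d" "b = y * e" unfolding principal_iff by blast
    then show "a * b \<in> principal D (x * y)" unfolding principal_iff using Dmul
      by (intro bexI[of _ "d * e"]) (auto simp: ac_simps)
  qed
  show "principal D (x * y) \<subseteq> ideal_prod (principal D x) (principal D y)"
  proof
    fix z assume "z \<in> principal D (x * y)"
    then obtain d where "d \<in> D" "z = x * y * d" unfolding principal_iff by blast
    moreover have "x * d \<in> principal D x" "y \<in> principal D y" using \<open>d \<in> D\<close> principal_mem unfolding principal_iff by auto
    ultimately show "z \<in> ideal_prod (principal D x) (principal D y)" using ip_mem[of "x*d" _ y] by (simp add: ac_simps)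
  qed
qed


end

locale fwd = so +
  fixes P :: "'a::field set"
  assumes P: "max_star_ideal D st P" and T2: "star_SH_type2 D st"
begin

abbreviation "PP \<equiv> ideal_power D P"

lemma iP: "integral_star_ideal D st P" using max_isi P .
lemma fP: "frac_ideal D P" using isi_frac iP .
lemma PD: "P \<subseteq> D" using isi_sub iP .
lemma stP: "st P = P" using isi_st iP .
lemma smP: "submod D P" using frac_submod fP .
lemma primeP: "prime_ideal D P" using max_prime P .
lemma P1: "1 \<notin> P" using max_1 P .
lemma P0: "0 \<in> P" using submod_0 smP .

lemma PP_frac: "frac_ideal D (PP n)" and PP_D: "PP n \<subseteq> D"
  using ipow_frac[OF fP PD] by auto

lemma PP_sm: "submod D (PP n)" using frac_submod PP_frac .

lemma primeP': "x \<in> D \<Longrightarrow> y \<in> D \<Longrightarrow> x * y \<in> P \<Longrightarrow> x \<in> P \<or> y \<in> P"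
  using primeP unfolding prime_ideal_def by blast

lemma ip_notP: assumes "A \<subseteq> D" "B \<subseteq> D" "\<not> A \<subseteq> P" "\<not> B \<subseteq> P" shows "\<not> ideal_prod A B \<subseteq> P"
proof -
  obtain a b where "a \<in> A" "a \<notin> P" "b \<in> B" "b \<notin> P" using assms by blast
  then have "a * b \<notin> P" "a * b \<in> ideal_prod A B" using primeP' assms ip_mem by blast+
  then show ?thesis by blast
qed

lemma ip_int: "A \<subseteq> D \<Longrightarrow> B \<subseteq> D \<Longrightarrow> ideal_prod A B \<subseteq> D"
  by (rule ip_sub[OF submod_D]) (use Dmul in blast)

definition dec :: "'a \<Rightarrow> nat \<Rightarrow> 'a set \<Rightarrow> bool" where
  "dec x e A \<longleftrightarrow> frac_ideal D A \<and> A \<subseteq> D \<and> \<not> A \<subseteq> P \<and> principal D x = st (ideal_prod (PP e) A)"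

lemma list_dec: "(\<forall>I\<in>set Is. star_homog_type2 D st I) \<Longrightarrow>
   \<exists>e A. frac_ideal D A \<and> A \<subseteq> D \<and> \<not> A \<subseteq> P \<and> st (prod_ideals D Is) = st (ideal_prod (PP e) A)"
proof (induction Is)
  case Nil
  have "st (prod_ideals D []) = st (ideal_prod (PP 0) D)" using prod_Nil ipow_0 ip_D submod_D by simp
  then show ?case using frac_D P1 D1 by blast
next
  case (Cons I Is)
  then obtain e A where A: "frac_ideal D A" "A \<subseteq> D" "\<not> A \<subseteq> P" "st (prod_ideals D Is) = st (ideal_prod (PP e) A)"
    by auto
  have t2: "star_homog_type2 D st I" using Cons by simp
  then have H: "star_homog D st I" unfolding star_homog_type2_def by blast
  have fI: "frac_ideal D I" and ID: "I \<subseteq> D" using isi_frac isi_sub homog_isi[OF H] by auto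
  have Rf: "frac_ideal D (prod_ideals D Is) \<and> prod_ideals D Is \<subseteq> D"
  proof (rule prod_frac, rule ballI)
    fix J assume "J \<in> set Is"
    then have "star_homog D st J" using Cons unfolding star_homog_type2_def by auto
    then show "frac_ideal D J \<and> J \<subseteq> D" using isi_frac isi_sub homog_isi by blast
  qed
  have fX: "frac_ideal D (ideal_prod (PP e) A)" using frac_ip PP_frac A(1) by blast
  have "st (prod_ideals D (I # Is)) = st (ideal_prod I (st (prod_ideals D Is)))"
    using prod_Cons S3[OF fI] Rf by simp
  also have "\<dots> = st (ideal_prod I (ideal_prod (PP e) A))" using A(4) S3[OF fI fX] by simp
  finally have eq: "st (prod_ideals D (I # Is)) = st (ideal_prod I (ideal_prod (PP e) A))" .
  show ?case
  proof (cases "I \<subseteq> P")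
    case True
    have M: "M_of D st I = P" using M_of_eq[OF H P True] .
    obtain n where n: "I = st (PP n)" using t2 M unfolding star_homog_type2_def by auto
    have "st (ideal_prod I (ideal_prod (PP e) A)) = st (ideal_prod (PP n) (ideal_prod (PP e) A))"
      using n S3'[OF PP_frac fX] by simp
    also have "ideal_prod (PP n) (ideal_prod (PP e) A) = ideal_prod (PP (n + e)) A"
      using ip_assoc[OF PP_sm PP_sm frac_submod[OF A(1)]] ipow_add[OF fP PD] by simp
    finally show ?thesis using eq A by metis
  next
    case False
    have "ideal_prod I (ideal_prod (PP e) A) = ideal_prod (PP e) (ideal_prod I A)"
      using ip_lcomm frac_submod fI PP_sm A(1) by blast
    moreover have "frac_ideal D (ideal_prod I A)" using frac_ip fI A(1) by blast
    moreover have "ideal_prod I A \<subseteq> D" using ip_int ID A(2) by blast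
    moreover have "\<not> ideal_prod I A \<subseteq> P" using ip_notP ID A(2) False A(3) by blast
    ultimately show ?thesis using eq by metis
  qed
qed

lemma dec_exists: assumes x: "x \<in> D" "x \<noteq> 0" shows "\<exists>e A. dec x e A"
proof (cases "x \<in> P")
  case False
  have "st (ideal_prod (PP 0) (principal D x)) = principal D x"
    using ipow_0 ip_D' principal_submod x st_principal by simp
  moreover have "\<not> principal D x \<subseteq> P" using principal_mem False by blast
  ultimately have "dec x 0 (principal D x)" unfolding dec_def using frac_principal principal_sub x by simp
  then show ?thesis by blast
next
  case True
  have "\<not> is_unit_in D x"
  proof
    assume "is_unit_in D x"
    then obtain y where "y \<in> D" "x * y = 1" unfolding is_unit_in_def by blast
    then show False using True submod_mul' smP P1 by metis
  qed
  then obtain Is where Is: "\<forall>I\<in>set Is. star_homog_type2 D st I" "principal D x = st (prod_ideals D Is)"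
    using T2 x unfolding star_SH_type2_def by blast
  then show ?thesis using list_dec[OF Is(1)] unfolding dec_def by metis
qed


lemma inv_exists: "\<exists>Q. frac_ideal D Q \<and> st (ideal_prod P Q) = D"
proof -
  obtain x0 where x0: "x0 \<in> P" "x0 \<noteq> 0" using frac_nz fP by blast
  have x0D: "x0 \<in> D" using x0 PD by blast
  obtain e A where d: "dec x0 e A" using dec_exists x0D x0 by blast
  have A: "frac_ideal D A" "A \<subseteq> D" "\<not> A \<subseteq> P" "principal D x0 = st (ideal_prod (PP e) A)"
    using d unfolding dec_def by auto
  have pP: "principal D x0 \<subseteq> P" using x0 submod_mul' smP by (auto simp: principal_iff)
  have "e \<noteq> 0"
  proof
    assume "e = 0"
    then have "principal D x0 = st A" using A(4) ipow_0 ip_D' frac_submod A(1) by simp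
    then show False using st_ext[OF A(1)] pP A(3) by blast
  qed
  then obtain e1 where e: "e = Suc e1" by (cases e) auto
  let ?B = "ideal_prod (PP e1) A"
  have fB: "frac_ideal D ?B" using frac_ip PP_frac A(1) by blast
  let ?Q = "smult (1 / x0) ?B"
  have fQ: "frac_ideal D ?Q" using frac_smult[OF fB _ x0D x0(2)] x0 D1 by simp
  have "ideal_prod P ?Q = smult (1 / x0) (ideal_prod P ?B)" using ip_smult[of "1/x0" P ?B] x0 by simp
  moreover have "ideal_prod P ?B = ideal_prod (PP e) A"
    using e ipow_Suc ip_assoc[OF smP PP_sm frac_submod[OF A(1)]] by simp
  ultimately have "st (ideal_prod P ?Q) = smult (1 / x0) (st (ideal_prod (PP e) A))"
    using st_smult[of "1/x0"] x0 frac_ip[OF PP_frac A(1)] by simp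
  also have "\<dots> = D" using A(4) smult_principal[of "1/x0" x0] x0 principal_1 by simp
  finally show ?thesis using fQ by blast
qed

definition "Qi = (SOME Q. frac_ideal D Q \<and> st (ideal_prod P Q) = D)"

lemma fQi: "frac_ideal D Qi" and PQi: "st (ideal_prod P Qi) = D"
  using someI_ex[OF inv_exists] unfolding Qi_def by auto

lemma cancel_aux: assumes "frac_ideal D X"
  shows "st X = st (ideal_prod Qi (st (ideal_prod P X)))"
proof -
  have fPX: "frac_ideal D (ideal_prod P X)" using frac_ip fP assms by blast
  have fQP: "frac_ideal D (ideal_prod Qi P)" using frac_ip fQi fP by blast
  have "st X = st (ideal_prod D X)" using ip_D' frac_submod assms by simp
  also have "\<dots> = st (ideal_prod (st (ideal_prod Qi P)) X)" using PQi ip_comm by metis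
  also have "\<dots> = st (ideal_prod (ideal_prod Qi P) X)" using S3'[OF fQP assms] .
  also have "\<dots> = st (ideal_prod Qi (ideal_prod P X))"
    using ip_assoc[OF frac_submod[OF fQi] smP frac_submod[OF assms]] by simp
  also have "\<dots> = st (ideal_prod Qi (st (ideal_prod P X)))" using S3[OF fQi fPX] by simp
  finally show ?thesis .
qed

lemma cancel_le: assumes "frac_ideal D X" "frac_ideal D Y" "st (ideal_prod P X) \<subseteq> st (ideal_prod P Y)"
  shows "st X \<subseteq> st Y"
proof -
  have fPX: "frac_ideal D (ideal_prod P X)" using frac_ip fP assms by blast
  have fPY: "frac_ideal D (ideal_prod P Y)" using frac_ip fP assms by blast
  have "st (ideal_prod Qi (st (ideal_prod P X))) \<subseteq> st (ideal_prod Qi (st (ideal_prod P Y)))"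
    using st_mono[OF frac_ip[OF fQi st_frac[OF fPX]] frac_ip[OF fQi st_frac[OF fPY]]]
      ip_mono[OF order_refl assms(3)] by blast
  then show ?thesis using cancel_aux assms by simp
qed

lemma cancel_pow: "frac_ideal D X \<Longrightarrow> frac_ideal D Y \<Longrightarrow> st (ideal_prod (PP e) X) \<subseteq> st (ideal_prod (PP e) Y)
   \<Longrightarrow> st X \<subseteq> st Y"
proof (induction e)
  case 0 then show ?case using ipow_0 ip_D' frac_submod by simp
next
  case (Suc e)
  have "ideal_prod (PP (Suc e)) X = ideal_prod P (ideal_prod (PP e) X)"
    using ipow_Suc ip_assoc[OF smP PP_sm frac_submod[OF Suc(2)]] by simp
  moreover have "ideal_prod (PP (Suc e)) Y = ideal_prod P (ideal_prod (PP e) Y)"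
    using ipow_Suc ip_assoc[OF smP PP_sm frac_submod[OF Suc(3)]] by simp
  ultimately have "st (ideal_prod (PP e) X) \<subseteq> st (ideal_prod (PP e) Y)"
    using cancel_le[OF frac_ip[OF PP_frac Suc(2)] frac_ip[OF PP_frac Suc(3)]] Suc(4) by simp
  then show ?case using Suc by blast
qed

lemma st_PP1: "st (PP 1) = P" using ipow_1 fP stP by simp

lemma dec_char: assumes d: "dec x e A" shows "x \<in> st (PP m) \<longleftrightarrow> m \<le> e"
proof -
  have A: "frac_ideal D A" "A \<subseteq> D" "\<not> A \<subseteq> P" "principal D x = st (ideal_prod (PP e) A)"
    using d unfolding dec_def by auto
  have fX: "frac_ideal D (ideal_prod (PP e) A)" using frac_ip PP_frac A(1) by blast
  have sub: "ideal_prod (PP e) A \<subseteq> PP e"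
    by (rule ip_sub[OF PP_sm]) (use A(2) PP_sm submod_mul' in blast)
  show ?thesis
  proof
    assume xm: "x \<in> st (PP m)"
    show "m \<le> e"
    proof (rule ccontr)
      assume "\<not> m \<le> e"
      then obtain k where k: "m = e + k" "1 \<le> k" by (intro that[of "m - e"]) auto
      have "principal D x \<subseteq> st (PP m)" using xm submod_mul' st_submod[OF PP_frac] by (auto simp: principal_iff)
      then have "st (ideal_prod (PP e) A) \<subseteq> st (ideal_prod (PP e) (PP k))"
        using A(4) ipow_add[OF fP PD] k(1) by simp
      then have "st A \<subseteq> st (PP k)" using cancel_pow[OF A(1) PP_frac] by blast
      also have "\<dots> \<subseteq> st P" using st_mono[OF PP_frac fP ipow_sub[OF fP PD k(2)]] .
      finally show False using st_ext[OF A(1)] stP A(3) by blast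
    qed
  next
    assume "m \<le> e"
    have "x \<in> principal D x" using principal_mem .
    also have "\<dots> \<subseteq> st (PP e)" using A(4) st_mono[OF fX PP_frac sub] by simp
    also have "\<dots> \<subseteq> st (PP m)" using st_mono[OF PP_frac PP_frac ipow_anti[OF fP PD \<open>m \<le> e\<close>]] .
    finally show "x \<in> st (PP m)" .
  qed
qed

lemma dec_unique: "dec x e A \<Longrightarrow> dec x e' A' \<Longrightarrow> e = e'"
  using dec_char by (meson le_antisym order_refl)

definition "ev x = (THE e. \<exists>A. dec x e A)"

lemma ev_eq: "dec x e A \<Longrightarrow> ev x = e"
  unfolding ev_def using dec_unique by (intro the_equality) blast+

lemma ev_dec: "x \<in> D \<Longrightarrow> x \<noteq> 0 \<Longrightarrow> \<exists>A. dec x (ev x) A"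
  using dec_exists ev_eq by metis

lemma ev_char: "x \<in> D \<Longrightarrow> x \<noteq> 0 \<Longrightarrow> x \<in> st (PP m) \<longleftrightarrow> m \<le> ev x"
  using ev_dec dec_char by blast

lemma ev_P: "x \<in> D \<Longrightarrow> x \<noteq> 0 \<Longrightarrow> x \<in> P \<longleftrightarrow> 1 \<le> ev x"
  using ev_char[of x 1] st_PP1 by simp

lemma ev_1: "ev 1 = 0"
  using ev_P[of 1] P1 D1 by simp


lemma ev_mult: assumes x: "x \<in> D" "x \<noteq> 0" and y: "y \<in> D" "y \<noteq> 0"
  shows "ev (x * y) = ev x + ev y"
proof -
  obtain A where "dec x (ev x) A" using ev_dec x by blast
  then have A: "frac_ideal D A" "A \<subseteq> D" "\<not> A \<subseteq> P" "principal D x = st (ideal_prod (PP (ev x)) A)"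
    unfolding dec_def by auto
  obtain B where "dec y (ev y) B" using ev_dec y by blast
  then have B: "frac_ideal D B" "B \<subseteq> D" "\<not> B \<subseteq> P" "principal D y = st (ideal_prod (PP (ev y)) B)"
    unfolding dec_def by auto
  let ?X = "ideal_prod (PP (ev x)) A" and ?Y = "ideal_prod (PP (ev y)) B"
  have fX: "frac_ideal D ?X" using frac_ip[OF PP_frac A(1)] .
  have fY: "frac_ideal D ?Y" using frac_ip[OF PP_frac B(1)] .
  have xy0: "x * y \<noteq> 0" using x y by simp
  have e1: "ideal_prod (st ?X) (st ?Y) = principal D (x * y)"
    using principal_prod[OF x(1) y(1)] unfolding A(4) B(4) .
  have "principal D (x * y) = st (principal D (x * y))" using st_principal[OF xy0] by (rule sym)
  also have "\<dots> = st (ideal_prod (st ?X) (st ?Y))" using e1 by (rule arg_cong[of _ _ st, OF sym])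
  also have "\<dots> = st (ideal_prod (st ?X) ?Y)" by (rule S3[OF st_frac[OF fX] fY])
  also have "\<dots> = st (ideal_prod ?X ?Y)" by (rule S3'[OF fX fY])
  also have "ideal_prod ?X ?Y = ideal_prod (PP (ev x + ev y)) (ideal_prod A B)"
  proof -
    have sA: "submod D A" and sB: "submod D B" using A(1) B(1) frac_submod by auto
    have "ideal_prod ?X ?Y = ideal_prod (PP (ev x)) (ideal_prod A ?Y)"
      using ip_assoc[OF PP_sm sA ip_submod[OF PP_sm]] by simp
    also have "ideal_prod A ?Y = ideal_prod (PP (ev y)) (ideal_prod A B)"
      using ip_lcomm[OF sA PP_sm sB] by simp
    also have "ideal_prod (PP (ev x)) (ideal_prod (PP (ev y)) (ideal_prod A B)) =
        ideal_prod (ideal_prod (PP (ev x)) (PP (ev y))) (ideal_prod A B)"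
      using ip_assoc[OF PP_sm PP_sm ip_submod[OF sA]] by simp
    finally show ?thesis using ipow_add[OF fP PD] by simp
  qed
  finally have "principal D (x * y) = st (ideal_prod (PP (ev x + ev y)) (ideal_prod A B))" .
  moreover have "frac_ideal D (ideal_prod A B)" using frac_ip A(1) B(1) by blast
  moreover have "ideal_prod A B \<subseteq> D" using ip_int A(2) B(2) by blast
  moreover have "\<not> ideal_prod A B \<subseteq> P" using ip_notP A(2,3) B(2,3) by blast
  ultimately have "dec (x * y) (ev x + ev y) (ideal_prod A B)" unfolding dec_def by blast
  then show ?thesis using ev_eq by blast
qed

lemma ev_pow: "x \<in> D \<Longrightarrow> x \<noteq> 0 \<Longrightarrow> ev (x ^ n) = n * ev x"
proof (induction n)
  case 0 then show ?case using ev_1 by simp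
next
  case (Suc n)
  then show ?case using ev_mult[of x "x ^ n"] Dpow by simp
qed

lemma ev_add: assumes "x \<in> D" "x \<noteq> 0" "y \<in> D" "y \<noteq> 0" "x + y \<noteq> 0"
  shows "min (ev x) (ev y) \<le> ev (x + y)"
proof -
  let ?m = "min (ev x) (ev y)"
  have "x \<in> st (PP ?m)" "y \<in> st (PP ?m)" using ev_char assms by auto
  then have "x + y \<in> st (PP ?m)" using submod_add st_submod[OF PP_frac] by blast
  then show ?thesis using ev_char assms Dadd by blast
qed

lemma ev_div: assumes x: "x \<in> D" "x \<noteq> 0" and y: "y \<in> D" "y \<noteq> 0" and le: "ev y \<le> ev x"
  shows "\<exists>s\<in>D. s \<notin> P \<and> (\<exists>c\<in>D. x * s = y * c)"
proof -
  obtain B where "dec y (ev y) B" using ev_dec y by blast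
  then have B: "frac_ideal D B" "B \<subseteq> D" "\<not> B \<subseteq> P" "principal D y = st (ideal_prod (PP (ev y)) B)"
    unfolding dec_def by auto
  obtain s where s: "s \<in> B" "s \<notin> P" using B(3) by blast
  have sD: "s \<in> D" and s0: "s \<noteq> 0" using s B(2) P0 by auto
  have xin: "x \<in> st (PP (ev y))" using ev_char x le by blast
  have fs: "frac_ideal D (smult s (PP (ev y)))" using frac_smult[OF PP_frac s0 D1] sD by simp
  have "smult s (PP (ev y)) \<subseteq> ideal_prod (PP (ev y)) B"
    using s(1) ip_mem by (auto simp: smult_iff mult.commute)
  then have "st (smult s (PP (ev y))) \<subseteq> principal D y"
    using st_mono[OF fs frac_ip[OF PP_frac B(1)]] B(4) by simp
  moreover have "s * x \<in> st (smult s (PP (ev y)))" using st_smult[OF s0 PP_frac] xin by (auto simp: smult_iff)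
  ultimately have "s * x \<in> principal D y" by blast
  then obtain c where "c \<in> D" "s * x = y * c" unfolding principal_iff by blast
  then show ?thesis using sD s(2) by (intro bexI[of _ s]) (auto simp: mult.commute)
qed

lemma uniformizer: "\<exists>y\<in>P. y \<noteq> 0 \<and> ev y = 1"
proof -
  have "\<not> P \<subseteq> st (PP 2)"
  proof
    assume a: "P \<subseteq> st (PP 2)"
    have "PP 2 = ideal_prod P P" using ipow_Suc[of P 1] ipow_1[OF fP] by (simp add: numeral_2_eq_2)
    moreover have "P = ideal_prod P D" using ip_D smP by simp
    ultimately have "st (ideal_prod P D) \<subseteq> st (ideal_prod P P)" using a stP by simp
    then have "st D \<subseteq> st P" using cancel_le[OF frac_D fP] by blast
    then show False using st_D stP P1 D1 by blast
  qed
  then obtain y where y: "y \<in> P" "y \<notin> st (PP 2)" by blast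
  have y0: "y \<noteq> 0" using y(2) submod_0 st_submod[OF PP_frac] by blast
  have yD: "y \<in> D" using y PD by blast
  have "1 \<le> ev y" "\<not> 2 \<le> ev y" using ev_P ev_char yD y0 y by auto
  then show ?thesis using y y0 by auto
qed

end

locale fwdq = fwd +
  assumes QF: "is_quotient_field D"
begin

definition "nd z = (SOME p. fst p \<in> D \<and> snd p \<in> D \<and> snd p \<noteq> 0 \<and> z = fst p / snd p)"

lemma nd_prop: "fst (nd z) \<in> D \<and> snd (nd z) \<in> D \<and> snd (nd z) \<noteq> 0 \<and> z = fst (nd z) / snd (nd z)"
proof -
  obtain a b where "a \<in> D" "b \<in> D" "b \<noteq> 0" "z = a / b" using QF unfolding is_quotient_field_def by blast
  then have "\<exists>p. fst p \<in> D \<and> snd p \<in> D \<and> snd p \<noteq> 0 \<and> z = fst p / snd p" by (intro exI[of _ "(a, b)"]) auto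
  then show ?thesis unfolding nd_def by (rule someI_ex)
qed

definition "vv z = (if z = 0 then 0 else int (ev (fst (nd z))) - int (ev (snd (nd z))))"

lemma vv_rep: assumes "a \<in> D" "b \<in> D" "a \<noteq> 0" "b \<noteq> 0"
  shows "vv (a / b) = int (ev a) - int (ev b)"
proof -
  let ?z = "a / b"
  obtain a' b' where p: "nd ?z = (a', b')" by (cases "nd ?z") auto
  have a'b': "a' \<in> D" "b' \<in> D" "b' \<noteq> 0" "?z = a' / b'" using nd_prop[of ?z] p by auto
  have z0: "?z \<noteq> 0" using assms by simp
  have a'0: "a' \<noteq> 0" using a'b'(4) z0 by auto
  have "a' * b = a * b'" using a'b'(4) assms(4) a'b'(3) by (simp add: frac_eq_eq)
  then have "ev (a' * b) = ev (a * b')" by simp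
  then have "ev a' + ev b = ev a + ev b'" using ev_mult a'b' assms a'0 by simp
  then show ?thesis unfolding vv_def using z0 p by simp
qed

lemma vv_0: "vv 0 = 0" unfolding vv_def by simp

lemma vv_rep': assumes "z \<noteq> 0" obtains a b where "a \<in> D" "b \<in> D" "a \<noteq> 0" "b \<noteq> 0" "z = a / b"
proof -
  have "fst (nd z) \<in> D" "snd (nd z) \<in> D" "snd (nd z) \<noteq> 0" "z = fst (nd z) / snd (nd z)" using nd_prop by auto
  moreover then have "fst (nd z) \<noteq> 0" using assms by auto
  ultimately show ?thesis using that by blast
qed

lemma ev_notP: "s \<in> D \<Longrightarrow> s \<notin> P \<Longrightarrow> ev s = 0"
  using ev_P[of s] P0 by fastforce

lemma DVR: "is_DVR (localization D P)"
  unfolding is_DVR_def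
proof (intro exI[of _ vv] conjI allI impI)
  fix x y :: 'a assume xy: "x \<noteq> 0 \<and> y \<noteq> 0"
  obtain a b where ab: "a \<in> D" "b \<in> D" "a \<noteq> 0" "b \<noteq> 0" "x = a / b" using vv_rep' xy by blast
  obtain c d where cd: "c \<in> D" "d \<in> D" "c \<noteq> 0" "d \<noteq> 0" "y = c / d" using vv_rep' xy by blast
  have "x * y = (a * c) / (b * d)" using ab cd by simp
  then have "vv (x * y) = int (ev (a * c)) - int (ev (b * d))" using vv_rep Dmul ab cd by simp
  also have "\<dots> = vv x + vv y" using ev_mult ab cd vv_rep by simp
  finally show "vv (x * y) = vv x + vv y" .
next
  fix x y :: 'a assume xy: "x \<noteq> 0 \<and> y \<noteq> 0 \<and> x + y \<noteq> 0"
  obtain a b where ab: "a \<in> D" "b \<in> D" "a \<noteq> 0" "b \<noteq> 0" "x = a / b" using vv_rep' xy by blast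
  obtain c d where cd: "c \<in> D" "d \<in> D" "c \<noteq> 0" "d \<noteq> 0" "y = c / d" using vv_rep' xy by blast
  have ad: "a * d \<in> D" "a * d \<noteq> 0" and cb: "c * b \<in> D" "c * b \<noteq> 0" and bd: "b * d \<in> D" "b * d \<noteq> 0"
    using ab cd Dmul by auto
  have x: "x = (a * d) / (b * d)" and y: "y = (c * b) / (b * d)" using ab cd by auto
  have s: "x + y = (a * d + c * b) / (b * d)" using x y by (simp add: add_divide_distrib)
  have s0: "a * d + c * b \<noteq> 0" using s xy by auto
  have "vv x = int (ev (a * d)) - int (ev (b * d))" using vv_rep[OF ad(1) bd(1) ad(2) bd(2)] unfolding x[symmetric] .
  moreover have "vv y = int (ev (c * b)) - int (ev (b * d))" using vv_rep[OF cb(1) bd(1) cb(2) bd(2)] unfolding y[symmetric] .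
  moreover have "vv (x + y) = int (ev (a * d + c * b)) - int (ev (b * d))"
    using vv_rep[OF Dadd[OF ad(1) cb(1)] bd(1) s0 bd(2)] unfolding s[symmetric] .
  moreover have "min (ev (a * d)) (ev (c * b)) \<le> ev (a * d + c * b)" using ev_add ad cb s0 by blast
  ultimately show "min (vv x) (vv y) \<le> vv (x + y)" by linarith
next
  fix n :: int
  obtain u where u: "u \<in> P" "u \<noteq> 0" "ev u = 1" using uniformizer by blast
  have uD: "u \<in> D" using u PD by blast
  let ?k = "nat \<bar>n\<bar>"
  have uk: "u ^ ?k \<in> D" "u ^ ?k \<noteq> 0" "ev (u ^ ?k) = ?k" using Dpow uD u ev_pow by auto
  show "\<exists>x. x \<noteq> 0 \<and> vv x = n"
  proof (cases "0 \<le> n")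
    case True
    have "vv (u ^ ?k / 1) = int (ev (u ^ ?k)) - int (ev 1)" using vv_rep[OF uk(1) D1 uk(2)] by simp
    then show ?thesis using True ev_1 uk by (intro exI[of _ "u ^ ?k"]) auto
  next
    case False
    have "vv (1 / u ^ ?k) = int (ev 1) - int (ev (u ^ ?k))" using vv_rep[OF D1 uk(1) _ uk(2)] by simp
    then show ?thesis using False ev_1 uk by (intro exI[of _ "1 / u ^ ?k"]) auto
  qed
next
  show "localization D P = {x. x = 0 \<or> 0 \<le> vv x}"
  proof
    show "localization D P \<subseteq> {x. x = 0 \<or> 0 \<le> vv x}"
    proof
      fix z assume "z \<in> localization D P"
      then obtain a s where as: "a \<in> D" "s \<in> D" "s \<notin> P" "z = a / s" unfolding localization_def by blast
      have s0: "s \<noteq> 0" using as P0 by auto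
      show "z \<in> {x. x = 0 \<or> 0 \<le> vv x}"
      proof (cases "a = 0")
        case True then show ?thesis using as by simp
      next
        case False
        then have "vv z = int (ev a) - int (ev s)" using vv_rep as s0 by simp
        then show ?thesis using ev_notP as by simp
      qed
    qed
    show "{x. x = 0 \<or> 0 \<le> vv x} \<subseteq> localization D P"
    proof
      fix z assume z: "z \<in> {x. x = 0 \<or> 0 \<le> vv x}"
      show "z \<in> localization D P"
      proof (cases "z = 0")
        case True
        then have "z = 0 / 1" by simp
        then show ?thesis unfolding localization_def using D0 D1 P1 by blast
      next
        case False
        obtain a b where ab: "a \<in> D" "b \<in> D" "a \<noteq> 0" "b \<noteq> 0" "z = a / b" using vv_rep' False by blast
        have "0 \<le> vv z" using z False by simp
        then have "ev b \<le> ev a" using vv_rep ab by simp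
        then obtain s c where sc: "s \<in> D" "s \<notin> P" "c \<in> D" "a * s = b * c" using ev_div ab by blast
        have s0: "s \<noteq> 0" using sc P0 by auto
        have "z = c / s" using ab sc s0 by (simp add: frac_eq_eq)
        then show ?thesis unfolding localization_def using sc by blast
      qed
    qed
  qed
qed

lemma height1: "height_one D P"
  unfolding height_one_def
proof (intro conjI allI impI)
  show "prime_ideal D P" using primeP .
  show "P \<noteq> {0}" using fP unfolding frac_ideal_def by blast
  fix Q assume Q: "prime_ideal D Q \<and> Q \<subseteq> P"
  show "Q = {0} \<or> Q = P"
  proof (cases "Q = {0}")
    case True then show ?thesis by simp
  next
    case False
    have smQ: "submod D Q" using Q unfolding prime_ideal_def by blast
    then obtain q where q: "q \<in> Q" "q \<noteq> 0" using False submod_0 by blast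
    have qD: "q \<in> D" using q Q PD by blast
    have "P \<subseteq> Q"
    proof
      fix z assume zP: "z \<in> P"
      show "z \<in> Q"
      proof (cases "z = 0")
        case True then show ?thesis using submod_0 smQ by simp
      next
        case False
        have zD: "z \<in> D" using zP PD by blast
        have "1 \<le> ev z" using ev_P zD False zP by blast
        then have "ev q \<le> ev (z ^ ev q)" using ev_pow zD False by simp
        then obtain s c where sc: "s \<in> D" "s \<notin> P" "c \<in> D" "z ^ ev q * s = q * c"
          using ev_div[of "z ^ ev q" q] Dpow zD False qD q by auto
        have "q * c \<in> Q" using submod_mul' smQ q sc by blast
        moreover have "s \<notin> Q" using sc Q by blast
        ultimately have "z ^ ev q \<in> Q" using Q sc Dpow zD unfolding prime_ideal_def by metis
        then show ?thesis using prime_pow Q zD by blast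
      qed
    qed
    then show ?thesis using Q by blast
  qed
qed

end

context so
begin

lemma type2_of: assumes H: "star_homog D st I" and fQ: "frac_ideal D Q" and IQ: "st (ideal_prod I Q) = D"
  and DV: "\<And>P. max_star_ideal D st P \<Longrightarrow> is_DVR (localization D P)"
  shows "star_homog_type2 D st I"
proof -
  have iI: "integral_star_ideal D st I" using homog_isi H .
  have fI: "frac_ideal D I" and ID: "I \<subseteq> D" and stI: "st I = I" using isi_frac isi_sub isi_st iI by auto
  have smI: "submod D I" using frac_submod fI .
  obtain P where P: "max_star_ideal D st P" "I \<subseteq> P" using exists_max iI homog_neq H by blast
  have M: "M_of D st I = P" using M_of_eq H P by blast
  have iP: "integral_star_ideal D st P" using max_isi P(1) .
  have fP: "frac_ideal D P" and PD: "P \<subseteq> D" and stP: "st P = P" using isi_frac isi_sub isi_st iP by auto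
  have smP: "submod D P" using frac_submod fP .
  have P0: "0 \<in> P" using submod_0 smP .
  have P1: "1 \<notin> P" using max_1 P(1) .
  have primeP: "prime_ideal D P" using max_prime P(1) .
  obtain v :: "'a \<Rightarrow> int" where v: "\<forall>x y. x \<noteq> 0 \<and> y \<noteq> 0 \<longrightarrow> v (x * y) = v x + v y"
    "\<forall>x y. x \<noteq> 0 \<and> y \<noteq> 0 \<and> x + y \<noteq> 0 \<longrightarrow> min (v x) (v y) \<le> v (x + y)"
    "\<forall>n. \<exists>x. x \<noteq> 0 \<and> v x = n" "localization D P = {x. x = 0 \<or> 0 \<le> v x}"
    using DV[OF P(1)] unfolding is_DVR_def by blast
  have vm: "v (x * y) = v x + v y" if "x \<noteq> 0" "y \<noteq> 0" for x y using v(1) that by blast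
  have loc: "z \<in> localization D P \<longleftrightarrow> z = 0 \<or> 0 \<le> v z" for z using v(4) by blast
  have locI: "a / s \<in> localization D P" if "a \<in> D" "s \<in> D" "s \<notin> P" for a s
    unfolding localization_def using that by blast
  have vD: "0 \<le> v d" if "d \<in> D" "d \<noteq> 0" for d
    using locI[OF that(1) D1 P1] loc[of "d / 1"] that by simp
  have v1: "v 1 = 0" using vm[of 1 1] by simp
  have vinv: "v (1 / x) = - v x" if "x \<noteq> 0" for x using vm[of x "1/x"] that v1 by simp
  have vs: "v s = 0" if "s \<in> D" "s \<notin> P" for s
  proof -
    have s0: "s \<noteq> 0" using that P0 by auto
    have "0 \<le> v (1 / s)" using locI[OF D1 that] loc[of "1/s"] s0 by simp
    then show ?thesis using vinv[OF s0] vD[OF that(1) s0] by simp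
  qed
  have vp: "1 \<le> v p" if "p \<in> P" "p \<noteq> 0" for p
  proof (rule ccontr)
    assume "\<not> 1 \<le> v p"
    moreover have "0 \<le> v p" using vD that PD by blast
    ultimately have "v (1 / p) = 0" using vinv that by simp
    then have "1 / p \<in> localization D P" using loc by simp
    then obtain c s where cs: "c \<in> D" "s \<in> D" "s \<notin> P" "1 / p = c / s" unfolding localization_def by blast
    have s0: "s \<noteq> 0" using cs P0 by auto
    have "s = p * c" using cs(4) that s0 by (simp add: frac_eq_eq)
    then have "s \<in> P" using submod_mul' smP that cs by blast
    then show False using cs by blast
  qed
  have vpow: "v (x ^ k) = int k * v x" if "x \<noteq> 0" for x k
    by (induction k) (auto simp: v1 vm that algebra_simps)
  obtain u where u: "u \<in> P" "u \<noteq> 0" "v u = 1"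
  proof -
    obtain w where w: "w \<noteq> 0" "v w = 1" using v(3) by blast
    then have "w \<in> localization D P" using loc by simp
    then obtain a s where as: "a \<in> D" "s \<in> D" "s \<notin> P" "w = a / s" unfolding localization_def by blast
    have s0: "s \<noteq> 0" using as P0 by auto
    have a: "a = w * s" using as s0 by simp
    have a0: "a \<noteq> 0" using a w s0 by simp
    have "v a = 1" using a vm[OF w(1) s0] vs as w by simp
    moreover then have "a \<in> P" using vs as by fastforce
    ultimately show ?thesis using that a0 by blast
  qed
  have loc_div: "\<exists>s\<in>D. s \<notin> P \<and> (\<exists>c\<in>D. z * s = a * c)" if "z \<in> D" "a \<in> D" "a \<noteq> 0" "v a \<le> v z" "z \<noteq> 0" for z a
  proof -
    have "v (z * (1 / a)) = v z - v a" using vm[of z "1/a"] vinv that by simp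
    then have "z / a \<in> localization D P" using loc that by simp
    then obtain c s where cs: "c \<in> D" "s \<in> D" "s \<notin> P" "z / a = c / s" unfolding localization_def by blast
    have s0: "s \<noteq> 0" using cs P0 by auto
    have "z * s = a * c" using cs(4) that s0 by (simp add: frac_eq_eq mult.commute)
    then show ?thesis using cs by blast
  qed
  have fIQ: "frac_ideal D (ideal_prod I Q)" using frac_ip[OF fI fQ] .
  have IQD: "ideal_prod I Q \<subseteq> D" using st_ext[OF fIQ] IQ by simp
  obtain a q where aq: "a \<in> I" "q \<in> Q" "a * q \<notin> P"
  proof -
    have "\<not> ideal_prod I Q \<subseteq> P"
    proof
      assume "ideal_prod I Q \<subseteq> P"
      then have "st (ideal_prod I Q) \<subseteq> st P" using st_mono[OF fIQ fP] by blast
      then show False using IQ stP P1 D1 by blast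
    qed
    then show ?thesis using that ip_sub[OF smP] by blast
  qed
  have aqD: "a * q \<in> D" using ip_mem[OF aq(1,2)] IQD by blast
  have a0: "a \<noteq> 0" and q0: "q \<noteq> 0" using aq P0 by auto
  have aD: "a \<in> D" using aq ID by blast
  have vaq: "v a + v q = 0" using vm[OF a0 q0] vs[OF aqD aq(3)] by simp
  have va1: "1 \<le> v a" using vp aq P(2) a0 by blast
  define n where "n = nat (v a)"
  have n: "int n = v a" "0 < n" using va1 unfolding n_def by auto
  have Lem: "z \<in> I" if z: "z \<in> D" "s \<in> D" "s \<notin> P" "z * s \<in> I" for z s
  proof (cases "z = 0")
    case True then show ?thesis using submod_0 smI by simp
  next
    case False
    let ?S = "set_plus I (principal D s)"
    have smS: "submod D ?S" using set_plus_submod smI principal_submod z by blast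
    have SD: "?S \<subseteq> D" using set_plus_int ID principal_sub z by blast
    have IS: "I \<subseteq> ?S" using set_plus_left principal_submod z by blast
    have fS: "frac_ideal D ?S" using set_plus_frac[OF fI frac_principal[of s] ID principal_sub[of s]] z P0 by auto
    have "st ?S = D"
    proof (rule ccontr)
      assume ne: "st ?S \<noteq> D"
      obtain Q' where Q': "max_star_ideal D st Q'" "st ?S \<subseteq> Q'" using exists_max[OF isiI[OF fS SD] ne] by blast
      have "I \<subseteq> Q'" using IS st_ext[OF fS] Q'(2) by blast
      then have "Q' = P" using homog_unique[OF H Q'(1) P(1)] P(2) by blast
      moreover have "s \<in> ?S" unfolding set_plus_iff using submod_0[OF smI] principal_mem by force
      ultimately show False using st_ext[OF fS] Q'(2) z(3) by blast
    qed
    have fzS: "frac_ideal D (smult z ?S)" using frac_smult[OF fS False D1] z by simp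
    have zSI: "smult z ?S \<subseteq> I"
    proof
      fix y assume "y \<in> smult z ?S"
      then obtain i d where "i \<in> I" "d \<in> D" "y = z * (i + s * d)"
        by (auto simp: smult_iff set_plus_iff principal_iff)
      then have "y = z * i + (z * s) * d" by (simp add: algebra_simps)
      moreover have "z * i \<in> I" using submod_mul smI z \<open>i \<in> I\<close> by blast
      moreover have "(z * s) * d \<in> I" using submod_mul' smI z \<open>d \<in> D\<close> by blast
      ultimately show "y \<in> I" using submod_add smI by simp
    qed
    have "z \<in> smult z (st ?S)" using \<open>st ?S = D\<close> D1 by (force simp: smult_iff)
    also have "\<dots> = st (smult z ?S)" using st_smult[OF False fS] by simp
    also have "\<dots> \<subseteq> st I" using st_mono[OF fzS fI zSI] .
    finally show ?thesis using stI by simp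
  qed
  have W: "z \<in> I" if zz: "z \<in> D" "z \<noteq> 0" "v a \<le> v z" for z
  proof -
    obtain s c where sc: "s \<in> D" "s \<notin> P" "c \<in> D" "z * s = a * c" using loc_div[OF zz(1) aD a0 zz(3,2)] by blast
    have "a * c \<in> I" using submod_mul' smI aq(1) sc(3) by blast
    then show ?thesis using Lem zz sc by simp
  qed
  let ?Wm = "\<lambda>m::nat. {z. z \<in> D \<and> (z = 0 \<or> int m \<le> v z)}"
  have smW: "submod D (?Wm m)" for m
    unfolding submod_def
  proof (intro conjI ballI)
    show "0 \<in> ?Wm m" using D0 by simp
  next
    fix x y assume x: "x \<in> ?Wm m" and y: "y \<in> ?Wm m"
    show "x + y \<in> ?Wm m"
    proof (cases "x = 0 \<or> y = 0 \<or> x + y = 0")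
      case True then show ?thesis using x y Dadd by auto
    next
      case False
      then have "min (v x) (v y) \<le> v (x + y)" using v(2) by blast
      then show ?thesis using x y False Dadd by auto
    qed
  next
    fix d x assume d: "d \<in> D" and x: "x \<in> ?Wm m"
    show "d * x \<in> ?Wm m"
    proof (cases "d = 0 \<or> x = 0")
      case True then show ?thesis using D0 by auto
    next
      case False
      then have "v (d * x) = v d + v x" using vm by blast
      moreover have "0 \<le> v d" using vD d False by blast
      ultimately show ?thesis using x d False Dmul by auto
    qed
  qed
  have PPW: "ideal_power D P m \<subseteq> ?Wm m" for m
  proof (induction m)
    case 0 then show ?case using ipow_0 vD by auto
  next
    case (Suc m)
    show ?case unfolding ipow_Suc
    proof (rule ip_sub[OF smW])
      fix p y assume p: "p \<in> P" and y: "y \<in> ideal_power D P m"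
      then have yW: "y \<in> ?Wm m" using Suc by blast
      have pyD: "p * y \<in> D" using p yW PD Dmul by blast
      show "p * y \<in> ?Wm (Suc m)"
      proof (cases "p = 0 \<or> y = 0")
        case True then show ?thesis using D0 by auto
      next
        case False
        then have "v (p * y) = v p + v y" using vm by blast
        moreover have "1 \<le> v p" using vp p False by blast
        ultimately show ?thesis using pyD yW False by auto
      qed
    qed
  qed
  let ?Pn = "ideal_power D P n"
  have PnI: "?Pn \<subseteq> I"
  proof
    fix z assume "z \<in> ?Pn"
    then have "z \<in> ?Wm n" using PPW by blast
    then show "z \<in> I" using W n submod_0[OF smI] by (cases "z = 0") auto
  qed
  have fPn: "frac_ideal D ?Pn" and PnD: "?Pn \<subseteq> D" using ipow_frac[OF fP PD] by auto
  have smPn: "submod D ?Pn" using frac_submod fPn .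
  let ?PQ = "ideal_prod ?Pn Q"
  have fPQ: "frac_ideal D ?PQ" using frac_ip[OF fPn fQ] .
  have PQD: "?PQ \<subseteq> D" using ip_mono[OF PnI order_refl] IQD by blast
  have "st ?PQ = D"
  proof (rule ccontr)
    assume ne: "st ?PQ \<noteq> D"
    obtain Q' where Q': "max_star_ideal D st Q'" "st ?PQ \<subseteq> Q'" using exists_max[OF isiI[OF fPQ PQD] ne] by blast
    have PQQ': "?PQ \<subseteq> Q'" using st_ext[OF fPQ] Q'(2) by blast
    show False
    proof (cases "Q' = P")
      case True
      have "u ^ n * q \<in> ?PQ" using ip_mem[OF pow_in_ipow[OF u(1)] aq(2)] .
      then have inP: "u ^ n * q \<in> P" and inD: "u ^ n * q \<in> D" using PQQ' True PQD by auto
      have nz: "u ^ n * q \<noteq> 0" using u q0 by simp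
      have "v (u ^ n * q) = int n * v u + v q" using vm[of "u ^ n" q] vpow u q0 by simp
      then have "v (u ^ n * q) = 0" using u n vaq by simp
      then show False using vp[OF inP nz] by simp
    next
      case False
      have iQ': "integral_star_ideal D st Q'" using max_isi Q'(1) .
      have smQ': "submod D Q'" and stQ': "st Q' = Q'" and fQ': "frac_ideal D Q'"
        using isi_frac frac_submod isi_st iQ' by auto
      have "\<not> P \<subseteq> Q'"
      proof
        assume "P \<subseteq> Q'"
        then have "Q' = P" using max_max[OF P(1) iQ' max_neq[OF Q'(1)]] by blast
        then show False using False by simp
      qed
      then obtain p where p: "p \<in> P" "p \<notin> Q'" by blast
      have p0: "p \<noteq> 0" using p submod_0[OF smQ'] by auto
      have pD: "p \<in> D" using p PD by blast
      have pn0: "p ^ n \<noteq> 0" using p0 by simp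
      have "smult (p ^ n) Q \<subseteq> ?PQ" using smult_sub_ip pow_in_ipow[OF p(1)] by blast
      then have sQ': "smult (p ^ n) Q \<subseteq> Q'" using PQQ' by blast
      have "ideal_prod I (smult (p ^ n) Q) \<subseteq> Q'"
        by (rule ip_sub[OF smQ']) (use sQ' ID submod_mul[OF smQ'] in blast)
      then have sub: "smult (p ^ n) (ideal_prod I Q) \<subseteq> Q'" using ip_smult[OF pn0] by simp
      have fs: "frac_ideal D (smult (p ^ n) (ideal_prod I Q))" using frac_smult[OF fIQ pn0 D1] Dpow[OF pD] by simp
      have "p ^ n \<in> smult (p ^ n) (st (ideal_prod I Q))" using IQ D1 by (force simp: smult_iff)
      also have "\<dots> = st (smult (p ^ n) (ideal_prod I Q))" using st_smult[OF pn0 fIQ] by simp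
      also have "\<dots> \<subseteq> st Q'" using st_mono[OF fs fQ' sub] .
      finally have "p ^ n \<in> Q'" using stQ' by simp
      then have "p \<in> Q'" using prime_pow max_prime[OF Q'(1)] pD by blast
      then show False using p by blast
    qed
  qed
  have "I = st (ideal_prod I D)" using stI ip_D smI by simp
  also have "\<dots> = st (ideal_prod I (st ?PQ))" using \<open>st ?PQ = D\<close> by simp
  also have "\<dots> = st (ideal_prod I ?PQ)" using S3[OF fI fPQ] .
  also have "ideal_prod I ?PQ = ideal_prod ?Pn (ideal_prod I Q)" using ip_lcomm[OF smI smPn frac_submod[OF fQ]] .
  also have "st (ideal_prod ?Pn (ideal_prod I Q)) = st (ideal_prod ?Pn (st (ideal_prod I Q)))" using S3[OF fPn fIQ] by simp
  also have "\<dots> = st ?Pn" using IQ ip_D smPn by simp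
  finally have "I = st (ideal_power D (M_of D st I) n)" using M by simp
  then show ?thesis unfolding star_homog_type2_def using H n(2) by blast
qed

lemma prod_submod: "(\<forall>J\<in>set Is. submod D J) \<Longrightarrow> submod D (prod_ideals D Is)"
  by (induction Is) (auto simp: prod_Nil prod_Cons submod_D intro: ip_submod)

lemma prod_perm: "(\<forall>J\<in>set Is. submod D J) \<Longrightarrow> I \<in> set Is \<Longrightarrow>
    prod_ideals D Is = ideal_prod I (prod_ideals D (remove1 I Is))"
proof (induction Is)
  case Nil then show ?case by simp
next
  case (Cons J Js)
  show ?case
  proof (cases "J = I")
    case True then show ?thesis using prod_Cons by simp
  next
    case False
    then have IJs: "I \<in> set Js" using Cons by simp
    have sJ: "submod D J" and sI: "submod D I" using Cons IJs by auto
    have sR: "submod D (prod_ideals D (remove1 I Js))" using prod_submod Cons by (meson list.set_intros(2) notin_set_remove1)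
    have "prod_ideals D (J # Js) = ideal_prod J (ideal_prod I (prod_ideals D (remove1 I Js)))"
      using prod_Cons Cons IJs by simp
    also have "\<dots> = ideal_prod I (ideal_prod J (prod_ideals D (remove1 I Js)))" using ip_lcomm[OF sJ sI sR] .
    also have "\<dots> = ideal_prod I (prod_ideals D (remove1 I (J # Js)))" using False prod_Cons by simp
    finally show ?thesis .
  qed
qed

lemma bwd: assumes K: "star_Krull D st" shows "star_SH_type2 D st"
  unfolding star_SH_type2_def
proof (intro ballI impI)
  fix x assume x: "x \<in> D" "x \<noteq> 0 \<and> \<not> is_unit_in D x"
  have SH: "star_SH D st" and DV: "\<And>P. max_star_ideal D st P \<Longrightarrow> is_DVR (localization D P)"
    using K unfolding star_Krull_def star_weakly_Krull_def by auto
  obtain Is where Is: "Is \<noteq> []" "\<forall>I\<in>set Is. star_homog D st I" "principal D x = st (prod_ideals D Is)"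
    using SH x unfolding star_SH_def by blast
  have fIs: "\<forall>I\<in>set Is. frac_ideal D I \<and> I \<subseteq> D" using Is(2) homog_isi isi_frac isi_sub by blast
  have "\<forall>I\<in>set Is. star_homog_type2 D st I"
  proof
    fix I assume I: "I \<in> set Is"
    let ?R = "prod_ideals D (remove1 I Is)"
    have fR: "frac_ideal D ?R" using prod_frac fIs by (meson notin_set_remove1)
    have pe: "prod_ideals D Is = ideal_prod I ?R" using prod_perm fIs frac_submod I by blast
    have fI: "frac_ideal D I" using fIs I by blast
    have x0: "x \<noteq> 0" using x by blast
    let ?Q = "smult (1 / x) ?R"
    have fQ: "frac_ideal D ?Q" using frac_smult[OF fR _ x(1) x0] x0 D1 by simp
    have "st (ideal_prod I ?Q) = st (smult (1 / x) (ideal_prod I ?R))" using ip_smult[of "1/x" I ?R] x0 by simp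
    also have "\<dots> = smult (1 / x) (st (prod_ideals D Is))" using st_smult[of "1/x"] x0 frac_ip[OF fI fR] pe by simp
    also have "\<dots> = D" using Is(3)[symmetric] smult_principal[of "1/x" x] x0 principal_1 by simp
    finally show "star_homog_type2 D st I" using type2_of[OF _ fQ _ DV] Is(2) I by blast
  qed
  then show "\<exists>Is. Is \<noteq> [] \<and> (\<forall>I\<in>set Is. star_homog_type2 D st I) \<and> principal D x = st (prod_ideals D Is)"
    using Is by blast
qed

lemma fwd_main: assumes QF: "is_quotient_field D" and T: "star_SH_type2 D st" shows "star_Krull D st"
proof -
  have SH: "star_SH D st"
    unfolding star_SH_def
  proof (intro ballI impI)
    fix x assume "x \<in> D" "x \<noteq> 0 \<and> \<not> is_unit_in D x"
    then obtain Is where Is: "Is \<noteq> []" "\<forall>I\<in>set Is. star_homog_type2 D st I" "principal D x = st (prod_ideals D Is)"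
      using T unfolding star_SH_type2_def by blast
    have "\<forall>I\<in>set Is. star_homog D st I" using Is(2) unfolding star_homog_type2_def by blast
    then show "\<exists>Is. Is \<noteq> [] \<and> (\<forall>I\<in>set Is. star_homog D st I) \<and> principal D x = st (prod_ideals D Is)"
      using Is by blast
  qed
  have "height_one D P \<and> is_DVR (localization D P)" if P: "max_star_ideal D st P" for P
  proof -
    interpret fwdq D st P
      by unfold_locales (fact sub so fc P T QF)+
    show ?thesis using height1 DVR by blast
  qed
  then show ?thesis unfolding star_Krull_def star_weakly_Krull_def using SH by blast
qed

end

theorem theoremP4:
  fixes D :: "('a::field) set" and st :: "'a set \<Rightarrow> 'a set"
  assumes "subdomain D" and "is_quotient_field D"
    and "star_operation D st" and "finite_character D st"
  shows "star_SH_type2 D st \<longleftrightarrow> star_Krull D st"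
proof -
  interpret so D st by unfold_locales (fact assms)+
  show ?thesis using fwd_main[OF assms(2)] bwd by blast
qed

end
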